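(* Let $N,T$ be positive integers and let $\mathbf{x}_0=(0,2,4,\dots,2(N-1))$. Let $\mathbf{y}=(y_1,\dots,y_N)\in\mathbb{Z}^N$ with $y_1<y_2<\dots<y_N$, $y_i\equiv T \pmod 2$ for all $i$. Put $L_i=\frac{T+2(i-1)-y_i}{2}$ for $1\le i\le N$, and assume $T\ge L_1$ and $L_N\ge 0$ (so that $\mathbf{L}=(L_1,\dots,L_N)$ is a partition, $L_1\ge L_2\ge\dots\ge L_N\ge 0$, with all parts at most $T$). Let $\boldsymbol{\lambda}=(\lambda_1,\dots,\lambda_T)$ be the conjugate partition of $\mathbf{L}$, i.e. $\lambda_k=\#\{j: L_j\ge k\}$ for $1\le k\le T$. Then $$M_{N,T}(\mathbf{y})=\lim_{q\to1}s_{\lambda}(1,q,q^2,\dots,q^{T-1})=\lim_{q\to1}q^{\sum_{k=1}^{T}(k-1)\lambda_k}\prod_{1\le i<j\le T}\frac{q^{\lambda_i-\lambda_j+j-i}-1}{q^{j-i}-1}=\prod_{1\le i<j\le T}\frac{\lambda_i-\lambda_j+j-i}{j-i}.$$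
   Context: $M_{N,T}(\mathbf{y})$ denotes the number of $N$-tuples $(S_1,\dots,S_N)$ of simple random walk paths on $\mathbb{Z}$ (each $S_i:\{0,1,\dots,T\}\to\mathbb{Z}$ with $|S_i(t)-S_i(t-1)|=1$) such that $S_i(0)=2(i-1)$, $S_i(T)=y_i$, and $S_1(t)<S_2(t)<\dots<S_N(t)$ for all $t=0,1,\dots,T$ (vicious walks). For a partition $\boldsymbol\lambda$ with at most $T$ parts, the Schur function is $s_\lambda(z_1,\dots,z_T)=\sum_{\mathcal{T}}\prod_{k=1}^T z_k^{\#\{\text{entries of }\mathcal T\text{ equal to }k\}}$, the sum over all semistandard Young tableaux $\mathcal T$ of shape $\boldsymbol\lambda$ with entries in $\{1,\dots,T\}$ (entries weakly increasing along rows, strictly increasing down columns). *)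

theory Defs
  imports Complex_Main
begin

text \<open>A tuple (S_1,...,S_N) of paths S_i : {0..T} -> Z is encoded as
  S :: nat => nat => int, with S i t the position of walker i (1 <= i <= N) at time t (t <= T);
  values outside this range are fixed to 0 so that the set of tuples is finite.\<close>

definition vicious_walks :: "nat \<Rightarrow> nat \<Rightarrow> (nat \<Rightarrow> int) \<Rightarrow> (nat \<Rightarrow> nat \<Rightarrow> int) set" where
  "vicious_walks N T y = {S.
     (\<forall>i t. \<not> (1 \<le> i \<and> i \<le> N \<and> t \<le> T) \<longrightarrow> S i t = 0) \<and>
     (\<forall>i\<in>{1..N}. \<forall>t\<in>{1..T}. \<bar>S i t - S i (t - 1)\<bar> = 1) \<and>
     (\<forall>i\<in>{1..N}. S i 0 = 2 * (int i - 1)) \<and>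
     (\<forall>i\<in>{1..N}. S i T = y i) \<and>
     (\<forall>t\<in>{0..T}. \<forall>i\<in>{1..<N}. S i t < S (i + 1) t)}"

definition M_count :: "nat \<Rightarrow> nat \<Rightarrow> (nat \<Rightarrow> int) \<Rightarrow> nat" where
  "M_count N T y = card (vicious_walks N T y)"

text \<open>A partition with at most T parts is given by lam :: nat => nat, with parts lam 1, ..., lam T.\<close>

definition young_cells :: "nat \<Rightarrow> (nat \<Rightarrow> nat) \<Rightarrow> (nat \<times> nat) set" where
  "young_cells T lam = {(r, c). 1 \<le> r \<and> r \<le> T \<and> 1 \<le> c \<and> c \<le> lam r}"

definition ssyt :: "nat \<Rightarrow> (nat \<Rightarrow> nat) \<Rightarrow> (nat \<Rightarrow> nat \<Rightarrow> nat) set" where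
  "ssyt T lam = {tab.
     (\<forall>r c. (r, c) \<notin> young_cells T lam \<longrightarrow> tab r c = 0) \<and>
     (\<forall>(r, c) \<in> young_cells T lam. 1 \<le> tab r c \<and> tab r c \<le> T) \<and>
     (\<forall>(r, c) \<in> young_cells T lam. (r, c + 1) \<in> young_cells T lam \<longrightarrow> tab r c \<le> tab r (c + 1)) \<and>
     (\<forall>(r, c) \<in> young_cells T lam. (r + 1, c) \<in> young_cells T lam \<longrightarrow> tab r c < tab (r + 1) c)}"

definition schur :: "nat \<Rightarrow> (nat \<Rightarrow> nat) \<Rightarrow> (nat \<Rightarrow> real) \<Rightarrow> real" where
  "schur T lam z = (\<Sum>tab\<in>ssyt T lam.
      \<Prod>k\<in>{1..T}. z k ^ card {rc \<in> young_cells T lam. tab (fst rc) (snd rc) = k})"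

end

theory Submission
  imports Defs "Jordan_Normal_Form.Determinant"
begin

lemma gchoose_Suc_alt: "(z::real) gchoose Suc k = (z gchoose k) * (z - of_nat k) / of_nat (Suc k)"
proof -
  have "(z gchoose Suc k) * fact (Suc k) = (\<Prod>i=0..<Suc k. z - of_nat i)"
    by (rule gbinomial_mult_fact')
  also have "\<dots> = (\<Prod>i=0..<k. z - of_nat i) * (z - of_nat k)"
    by (simp add: prod.atLeast0_lessThan_Suc del: prod.op_ivl_Suc)
  also have "\<dots> = ((z gchoose k) * fact k) * (z - of_nat k)"
    by (simp add: gbinomial_mult_fact')
  finally have "fact k * ((z gchoose Suc k) * of_nat (Suc k)) = fact k * ((z gchoose k) * (z - of_nat k))"
    by (simp add: fact_Suc algebra_simps del: of_nat_Suc)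
  hence "(z gchoose Suc k) * of_nat (Suc k) = (z gchoose k) * (z - of_nat k)" by simp
  thus ?thesis by (simp add: field_simps del: of_nat_Suc)
qed

lemma aux1: "(a::real) * (z - r) / c + a * - ((x0 - r) / c) = a * (z - x0) / c"
  by (simp add: diff_divide_distrib right_diff_distrib)

lemma aux2: "(a::real) * (z - r) / c - a * (x0 - r) / c = a * (z - x0) / c"
  by (simp add: diff_divide_distrib right_diff_distrib)

definition vdm :: "nat \<Rightarrow> (nat \<Rightarrow> real) \<Rightarrow> real" where
  "vdm n x = (\<Prod>i<n. \<Prod>j\<in>{Suc i..<n}. x j - x i)"
definition sf :: "nat \<Rightarrow> real" where "sf n = (\<Prod>j<n. fact j)"

definition Vm :: "nat \<Rightarrow> (nat \<Rightarrow> real) \<Rightarrow> real mat" where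
  "Vm n x = mat n n (\<lambda>(i,j). x i gchoose j)"

lemma det_scale_rc:
  fixes B :: "real mat"
  assumes "B \<in> carrier_mat n n"
  shows "det (mat n n (\<lambda>(i,j). r i * c j * B $$ (i,j))) = (\<Prod>i<n. r i) * (\<Prod>j<n. c j) * det B"
proof -
  have C: "mat n n (\<lambda>(i,j). r i * c j * B $$ (i,j)) \<in> carrier_mat n n" by auto
  have "det (mat n n (\<lambda>(i,j). r i * c j * B $$ (i,j))) =
     (\<Sum>p\<in>{p. p permutes {0..<n}}. signof p * (\<Prod>i = 0..<n. r i * c (p i) * B $$ (i, p i)))"
    by (rule trans[OF det_def'[OF C]], rule sum.cong, auto intro!: prod.cong simp: permutes_def)
  also have "\<dots> = (\<Sum>p\<in>{p. p permutes {0..<n}}. (\<Prod>i<n. r i) * (\<Prod>j<n. c j) * (signof p * (\<Prod>i = 0..<n. B $$ (i, p i))))"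
  proof (rule sum.cong[OF refl])
    fix p assume "p \<in> {p. p permutes {0..<n}}"
    hence p: "p permutes {0..<n}" by simp
    have "(\<Prod>i = 0..<n. c (p i)) = (\<Prod>j = 0..<n. c j)"
      using prod.permute[OF p, of c] by (simp add: comp_def)
    thus "signof p * (\<Prod>i = 0..<n. r i * c (p i) * B $$ (i, p i)) =
      (\<Prod>i<n. r i) * (\<Prod>j<n. c j) * (signof p * (\<Prod>i = 0..<n. B $$ (i, p i)))"
      by (simp add: prod.distrib atLeast0LessThan)
  qed
  also have "\<dots> = (\<Prod>i<n. r i) * (\<Prod>j<n. c j) * det B"
    by (simp add: det_def'[OF assms] sum_distrib_left)
  finally show ?thesis .
qed

lemma sum_two_nonzero:
  fixes f :: "nat \<Rightarrow> real"
  assumes "j < m"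
  shows "(\<Sum>k<m. f k * (if k = j then 1 else if Suc k = j then c else 0)) =
     f j + (if j > 0 then f (j - 1) * c else 0)"
proof -
  have "(\<Sum>k<m. f k * (if k = j then 1 else if Suc k = j then c else 0)) =
    (\<Sum>k<m. (if k = j then f k else 0)) + (\<Sum>k<m. (if k = j - 1 \<and> j > 0 then f k * c else 0))"
    by (subst sum.distrib[symmetric], rule sum.cong, auto)
  also have "\<dots> = f j + (if j > 0 then f (j - 1) * c else 0)"
    using assms by (subst sum.delta, simp, cases "j > 0", auto simp: sum.delta)
  finally show ?thesis .
qed

lemma vdm_Suc: "vdm (Suc n) x = (\<Prod>i<n. x (Suc i) - x 0) * vdm n (x \<circ> Suc)"
proof -
  have "vdm (Suc n) x = (\<Prod>j\<in>{Suc 0..<Suc n}. x j - x 0) * (\<Prod>i<n. \<Prod>j\<in>{Suc (Suc i)..<Suc n}. x j - x (Suc i))"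
    unfolding vdm_def by (rule prod.lessThan_Suc_shift)
  also have "(\<Prod>j\<in>{Suc 0..<Suc n}. x j - x 0) = (\<Prod>i<n. x (Suc i) - x 0)"
    by (simp only: prod.shift_bounds_Suc_ivl atLeast0LessThan)
  also have "(\<Prod>i<n. \<Prod>j\<in>{Suc (Suc i)..<Suc n}. x j - x (Suc i)) = vdm n (x \<circ> Suc)"
    unfolding vdm_def by (simp only: prod.shift_bounds_Suc_ivl comp_def)
  finally show ?thesis .
qed

lemma vandermonde: "det (Vm n x) = vdm n x / sf n"
proof (induction n arbitrary: x)
  case 0
  then show ?case by (simp add: vdm_def sf_def Vm_def)
next
  case (Suc n)
  define A where "A = Vm (Suc n) x"
  define U :: "real mat" where "U = mat (Suc n) (Suc n) (\<lambda>(i,j). if i = j then 1 else if Suc i = j then - ((x 0 - of_nat i) / of_nat (Suc i)) else 0)"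
  define C :: "real mat" where "C = mat (Suc n) (Suc n) (\<lambda>(i,j). if j = 0 then 1 else (x i gchoose (j - 1)) * (x i - x 0) / of_nat j)"
  have A: "A \<in> carrier_mat (Suc n) (Suc n)" and U: "U \<in> carrier_mat (Suc n) (Suc n)"
    and Cc: "C \<in> carrier_mat (Suc n) (Suc n)"
    unfolding A_def Vm_def U_def C_def by auto
  have detU: "det U = 1"
  proof -
    have "upper_triangular U" unfolding U_def by (rule upper_triangularI) auto
    from det_upper_triangular[OF this U] have "det U = prod_list (diag_mat U)" .
    also have "\<dots> = 1" unfolding prod_list_diag_prod using U by (simp add: U_def)
    finally show ?thesis .
  qed
  have AU: "A * U = C"
  proof (rule eq_matI)
    fix i j assume i: "i < dim_row C" and j: "j < dim_col C"
    hence i: "i < Suc n" and j: "j < Suc n" using Cc by auto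
    have "(A * U) $$ (i,j) = (\<Sum>k<Suc n. A $$ (i,k) * U $$ (k,j))"
      using i j A U by (simp add: scalar_prod_def atLeast0LessThan)
    also have "\<dots> = (\<Sum>k<Suc n. (x i gchoose k) * (if k = j then 1 else if Suc k = j then - ((x 0 - of_nat (j - 1)) / of_nat j) else 0))"
      by (rule sum.cong[OF refl], insert i j, simp add: A_def Vm_def U_def)
    also have "\<dots> = C $$ (i,j)"
    proof (subst sum_two_nonzero[OF j], cases "j = 0")
      case False
      then obtain k where k: "j = Suc k" by (cases j) auto
      show "(x i gchoose j) + (if 0 < j then (x i gchoose (j - 1)) * - ((x 0 - real (j - 1)) / real j) else 0) = C $$ (i, j)"
        using i j unfolding k C_def by (simp add: gchoose_Suc_alt aux1 aux2 del: of_nat_Suc)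
    qed (use i in \<open>auto simp: C_def\<close>)
    finally show "(A * U) $$ (i,j) = C $$ (i,j)" .
  qed (use A U Cc in auto)
  have "det A = det C"
    using det_mult[OF A U] detU AU by simp
  also have "det C = (\<Sum>j<Suc n. C $$ (0, j) * cofactor C 0 j)"
    by (rule laplace_expansion_row[OF Cc], simp)
  also have "\<dots> = cofactor C 0 0"
    by (subst sum.lessThan_Suc_shift, simp add: C_def)
  also have "\<dots> = det (mat_delete C 0 0)" by (simp add: cofactor_def)
  also have "mat_delete C 0 0 = mat n n (\<lambda>(i,j). (x (Suc i) - x 0) * (1 / of_nat (Suc j)) * Vm n (x \<circ> Suc) $$ (i,j))"
    by (rule eq_matI, auto simp: mat_delete_def C_def Vm_def)
  also have "det \<dots> = (\<Prod>i<n. x (Suc i) - x 0) * (\<Prod>j<n. 1 / of_nat (Suc j)) * det (Vm n (x \<circ> Suc))"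
    by (rule det_scale_rc, simp add: Vm_def)
  also have "\<dots> = vdm (Suc n) x / sf (Suc n)"
  proof -
    have f: "(\<Prod>j<n. 1 / (of_nat (Suc j)::real)) = 1 / fact n"
      by (simp add: fact_prod_Suc prod_dividef atLeast0LessThan)
    show ?thesis unfolding Suc.IH vdm_Suc f by (simp add: sf_def)
  qed
  finally show ?case unfolding A_def .
qed

lemma gsum_tele:
  fixes a b :: int
  assumes "a \<le> b"
  shows "(\<Sum>k\<in>{a..<b}. (of_int k :: real) gchoose j) = (of_int b gchoose Suc j) - (of_int a gchoose Suc j)"
proof -
  obtain d where b: "b = a + int d" using assms by (metis zle_iff_zadd)
  have "(\<Sum>k\<in>{a..<a + int d}. (of_int k :: real) gchoose j) = (of_int (a + int d) gchoose Suc j) - (of_int a gchoose Suc j)"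
  proof (induction d)
    case 0 then show ?case by simp
  next
    case (Suc d)
    have s: "{a..<a + int (Suc d)} = insert (a + int d) {a..<a + int d}" by auto
    have "(of_int (a + int (Suc d)) :: real) = of_int (a + int d) + 1" by simp
    hence "(of_int (a + int (Suc d)) :: real) gchoose Suc j = (of_int (a + int d) gchoose j) + (of_int (a + int d) gchoose Suc j)"
      by (simp only: gbinomial_Suc_Suc)
    then show ?case unfolding s using Suc by simp
  qed
  thus ?thesis using b by simp
qed

lemma det_Vm: "det (Vm n x) = (\<Sum>p\<in>{p. p permutes {0..<n}}. signof p * (\<Prod>i<n. x i gchoose p i))"
proof -
  have C: "Vm n x \<in> carrier_mat n n" by (simp add: Vm_def)
  show ?thesis unfolding det_def'[OF C]
    by (rule sum.cong[OF refl], auto simp: Vm_def atLeast0LessThan intro!: prod.cong dest: permutes_in_image)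
qed

lemma box_det:
  fixes x :: "nat \<Rightarrow> int"
  assumes mono: "\<forall>i<n. x (Suc i) \<le> x i"
  shows "(\<Sum>m\<in>PiE {..<n} (\<lambda>i. {x (Suc i)..<x i}). det (Vm n (\<lambda>i. of_int (m i)))) =
     (-1)^n * det (Vm (Suc n) (\<lambda>i. of_int (x i)))"
proof -
  define B :: "real mat" where "B = mat n n (\<lambda>(i,j). (of_int (x i) gchoose Suc j) - (of_int (x (Suc i)) gchoose Suc j))"
  have Bc: "B \<in> carrier_mat n n" by (simp add: B_def)
  have "(\<Sum>m\<in>PiE {..<n} (\<lambda>i. {x (Suc i)..<x i}). det (Vm n (\<lambda>i. of_int (m i)))) =
     (\<Sum>m\<in>PiE {..<n} (\<lambda>i. {x (Suc i)..<x i}). \<Sum>p\<in>{p. p permutes {0..<n}}. signof p * (\<Prod>i<n. of_int (m i) gchoose p i))"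
    by (simp add: det_Vm)
  also have "\<dots> = (\<Sum>p\<in>{p. p permutes {0..<n}}. signof p * (\<Sum>m\<in>PiE {..<n} (\<lambda>i. {x (Suc i)..<x i}). \<Prod>i<n. of_int (m i) gchoose p i))"
    by (subst sum.swap, simp add: sum_distrib_left)
  also have "\<dots> = (\<Sum>p\<in>{p. p permutes {0..<n}}. signof p * (\<Prod>i<n. (of_int (x i) gchoose Suc (p i)) - (of_int (x (Suc i)) gchoose Suc (p i))))"
  proof (rule sum.cong[OF refl])
    fix p
    have "(\<Sum>m\<in>PiE {..<n} (\<lambda>i. {x (Suc i)..<x i}). \<Prod>i<n. (of_int (m i) :: real) gchoose p i) =
       (\<Prod>i<n. \<Sum>k\<in>{x (Suc i)..<x i}. of_int k gchoose p i)"
      by (rule prod_sum_PiE[symmetric], auto)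
    also have "\<dots> = (\<Prod>i<n. (of_int (x i) gchoose Suc (p i)) - (of_int (x (Suc i)) gchoose Suc (p i)))"
      by (rule prod.cong[OF refl], subst gsum_tele, use mono in auto)
    finally show "(signof p :: real) * (\<Sum>m\<in>PiE {..<n} (\<lambda>i. {x (Suc i)..<x i}). \<Prod>i<n. of_int (m i) gchoose p i) =
       signof p * (\<Prod>i<n. (of_int (x i) gchoose Suc (p i)) - (of_int (x (Suc i)) gchoose Suc (p i)))" by simp
  qed
  also have "\<dots> = det B"
    unfolding det_def'[OF Bc]
    by (rule sum.cong[OF refl], auto simp: B_def atLeast0LessThan intro!: prod.cong dest: permutes_in_image)
  also have "det B = (-1)^n * det (Vm (Suc n) (\<lambda>i. of_int (x i)))"
  proof -
    define A where "A = Vm (Suc n) (\<lambda>i. of_int (x i))"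
    define E :: "real mat" where "E = mat (Suc n) (Suc n) (\<lambda>(i,j). if i = j then 1 else if j = Suc i then -1 else 0)"
    define C :: "real mat" where "C = mat (Suc n) (Suc n) (\<lambda>(i,j). if i < n then A $$ (i,j) - A $$ (Suc i, j) else A $$ (i,j))"
    have A: "A \<in> carrier_mat (Suc n) (Suc n)" and E: "E \<in> carrier_mat (Suc n) (Suc n)"
      and Cc: "C \<in> carrier_mat (Suc n) (Suc n)"
      unfolding A_def Vm_def E_def C_def by auto
    have detE: "det E = 1"
    proof -
      have "upper_triangular E" unfolding E_def by (rule upper_triangularI) auto
      from det_upper_triangular[OF this E] have "det E = prod_list (diag_mat E)" .
      also have "\<dots> = 1" unfolding prod_list_diag_prod using E by (simp add: E_def)
      finally show ?thesis .
    qed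
    have EA: "E * A = C"
    proof (rule eq_matI)
      fix i j assume i: "i < dim_row C" and j: "j < dim_col C"
      hence i: "i < Suc n" and j: "j < Suc n" using Cc by auto
      have "(E * A) $$ (i,j) = (\<Sum>k<Suc n. E $$ (i,k) * A $$ (k,j))"
        using i j A E by (simp add: scalar_prod_def atLeast0LessThan)
      also have "\<dots> = (\<Sum>k<Suc n. (if k = i then A $$ (k,j) else 0) + (if k = Suc i then - A $$ (k,j) else 0))"
        by (rule sum.cong[OF refl], insert i, auto simp: E_def)
      also have "\<dots> = C $$ (i,j)"
        using i j by (auto simp: sum.distrib C_def less_Suc_eq)
      finally show "(E * A) $$ (i,j) = C $$ (i,j)" .
    qed (use A E Cc in auto)
    have "det A = det C"
      using det_mult[OF E A] detE EA by simp
    also have "det C = (\<Sum>i<Suc n. C $$ (i, 0) * cofactor C i 0)"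
      by (rule laplace_expansion_column[OF Cc], simp)
    also have "\<dots> = cofactor C n 0"
      by (subst sum.lessThan_Suc, subst sum.neutral, auto simp: C_def A_def Vm_def)
    also have "\<dots> = (-1)^n * det (mat_delete C n 0)" by (simp add: cofactor_def)
    also have "mat_delete C n 0 = B"
      by (rule eq_matI, auto simp: mat_delete_def C_def B_def A_def Vm_def)
    finally have "det A = (-1)^n * det B" .
    thus ?thesis unfolding A_def[symmetric] by simp
  qed
  finally show ?thesis .
qed

definition dvd' :: "nat \<Rightarrow> (nat \<Rightarrow> real) \<Rightarrow> real" where
  "dvd' n x = (\<Prod>i<n. \<Prod>j\<in>{Suc i..<n}. x i - x j)"

lemma dvd'_Suc: "dvd' (Suc n) x = (\<Prod>i<n. x 0 - x (Suc i)) * dvd' n (x \<circ> Suc)"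
proof -
  have "dvd' (Suc n) x = (\<Prod>j\<in>{Suc 0..<Suc n}. x 0 - x j) * (\<Prod>i<n. \<Prod>j\<in>{Suc (Suc i)..<Suc n}. x (Suc i) - x j)"
    unfolding dvd'_def by (rule prod.lessThan_Suc_shift)
  also have "(\<Prod>j\<in>{Suc 0..<Suc n}. x 0 - x j) = (\<Prod>i<n. x 0 - x (Suc i))"
    by (simp only: prod.shift_bounds_Suc_ivl atLeast0LessThan)
  also have "(\<Prod>i<n. \<Prod>j\<in>{Suc (Suc i)..<Suc n}. x (Suc i) - x j) = dvd' n (x \<circ> Suc)"
    unfolding dvd'_def by (simp only: prod.shift_bounds_Suc_ivl comp_def)
  finally show ?thesis .
qed

lemma dvd'_vdm: "dvd' n x = (-1) ^ (\<Sum>i<n. i) * vdm n x"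
proof (induction n arbitrary: x)
  case 0 then show ?case by (simp add: dvd'_def vdm_def)
next
  case (Suc n)
  have "(\<Prod>i<n. x 0 - x (Suc i)) = (\<Prod>i<n. - (x (Suc i) - x 0))" by simp
  also have "\<dots> = (-1) ^ n * (\<Prod>i<n. x (Suc i) - x 0)" by (subst prod_uminus, simp)
  finally have h: "(\<Prod>i<n. x 0 - x (Suc i)) = (-1) ^ n * (\<Prod>i<n. x (Suc i) - x 0)" .
  show ?case unfolding dvd'_Suc vdm_Suc Suc.IH h by (simp add: power_add)
qed

lemma dvd'_cong: "(\<And>k. k < n \<Longrightarrow> x k = y k) \<Longrightarrow> dvd' n x = dvd' n y"
  unfolding dvd'_def by (auto intro!: prod.cong)

lemma sf_vdm: "vdm n real = sf n"
proof -
  have "det (Vm n real) = 1"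
  proof -
    have C: "Vm n real \<in> carrier_mat n n" by (simp add: Vm_def)
    have "det (Vm n real) = prod_list (diag_mat (Vm n real))"
      by (rule det_lower_triangular[OF _ C], auto simp: Vm_def binomial_gbinomial[symmetric])
    also have "\<dots> = 1" unfolding prod_list_diag_prod using C
      by (simp add: Vm_def binomial_gbinomial[symmetric])
    finally show ?thesis .
  qed
  moreover have "sf n \<noteq> 0" by (simp add: sf_def)
  ultimately show ?thesis using vandermonde[of n real] by simp
qed

lemma prod_Suc_img: "(\<Prod>j\<in>Suc ` A. f j) = (\<Prod>j\<in>A. f (Suc j))"
  by (simp add: prod.reindex)

definition P :: "nat \<Rightarrow> (nat \<Rightarrow> nat) \<Rightarrow> real" where
  "P T lam = (\<Prod>i\<in>{1..T}. \<Prod>j\<in>{i<..T}. (real (lam i) - real (lam j) + real j - real i) / (real j - real i))"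

definition xs :: "nat \<Rightarrow> (nat \<Rightarrow> nat) \<Rightarrow> nat \<Rightarrow> real" where
  "xs T lam k = real (lam (Suc k)) + real T - 1 - real k"

lemma P_dvd: "P T lam = dvd' T (xs T lam) / sf T"
proof -
  have "P T lam = (\<Prod>i<T. \<Prod>j\<in>{Suc i..<T}. (xs T lam i - xs T lam j) / (real j - real i))"
  proof -
    have "P T lam = (\<Prod>i<T. \<Prod>j\<in>{Suc i<..T}. (real (lam (Suc i)) - real (lam j) + real j - real (Suc i)) / (real j - real (Suc i)))"
      unfolding P_def image_Suc_lessThan[symmetric] by (simp add: prod.reindex)
    also have "\<dots> = (\<Prod>i<T. \<Prod>j\<in>{Suc i..<T}. (xs T lam i - xs T lam j) / (real j - real i))"
    proof (rule prod.cong[OF refl])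
      fix i
      have e: "{Suc i<..T} = Suc ` {Suc i..<T}"
        by (subst image_Suc_atLeastLessThan, auto)
      show "(\<Prod>j\<in>{Suc i<..T}. (real (lam (Suc i)) - real (lam j) + real j - real (Suc i)) / (real j - real (Suc i))) =
         (\<Prod>j\<in>{Suc i..<T}. (xs T lam i - xs T lam j) / (real j - real i))"
        unfolding e prod_Suc_img by (rule prod.cong[OF refl], simp add: xs_def algebra_simps)
    qed
    finally show ?thesis .
  qed
  also have "\<dots> = dvd' T (xs T lam) / vdm T real"
    unfolding dvd'_def vdm_def by (simp add: prod_dividef)
  finally show ?thesis by (simp add: sf_vdm)
qed

lemma vdm_dvd': "vdm n x = (-1) ^ (\<Sum>i<n. i) * dvd' n x"
proof -
  have "((-1::real) ^ (\<Sum>i<n. i)) * (-1) ^ (\<Sum>i<n. i) = 1"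
    by (simp add: power_add[symmetric] flip: mult_2)
  thus ?thesis unfolding dvd'_vdm by (metis mult.assoc mult_1)
qed

definition Box :: "nat \<Rightarrow> (nat \<Rightarrow> nat) \<Rightarrow> (nat \<Rightarrow> nat) set" where
  "Box n lam = {mu. (\<forall>i. (i = 0 \<or> n < i) \<longrightarrow> mu i = 0) \<and> (\<forall>i\<in>{1..n}. lam (Suc i) \<le> mu i \<and> mu i \<le> lam i)}"

definition bx :: "(nat \<Rightarrow> nat) \<Rightarrow> nat \<Rightarrow> nat \<Rightarrow> int" where
  "bx lam n k = int (lam (Suc k)) + int n - int k"
definition bphi :: "nat \<Rightarrow> (nat \<Rightarrow> nat) \<Rightarrow> nat \<Rightarrow> int" where
  "bphi n mu k = (if k < n then int (mu (Suc k)) + int n - 1 - int k else undefined)"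
definition bpsi :: "nat \<Rightarrow> (nat \<Rightarrow> int) \<Rightarrow> nat \<Rightarrow> nat" where
  "bpsi n m i = (if 1 \<le> i \<and> i \<le> n then nat (m (i - 1) - int n + int i) else 0)"
definition BS :: "(nat \<Rightarrow> nat) \<Rightarrow> nat \<Rightarrow> (nat \<Rightarrow> int) set" where
  "BS lam n = PiE {..<n} (\<lambda>k. {bx lam n (Suc k)..<bx lam n k})"

lemma Box_bij1: assumes mu: "mu \<in> Box n lam" shows "bpsi n (bphi n mu) = mu"
proof
  fix i show "bpsi n (bphi n mu) i = mu i"
  proof (cases "1 \<le> i \<and> i \<le> n")
    case True
    then obtain k where k: "i = Suc k" "k < n" by (cases i) auto
    then show ?thesis unfolding bpsi_def bphi_def by auto
  next
    case False
    hence "i = 0 \<or> n < i" by auto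
    then show ?thesis using mu False unfolding bpsi_def bphi_def Box_def by auto
  qed
qed

lemma Box_bij2: assumes mu: "mu \<in> Box n lam" shows "bphi n mu \<in> BS lam n"
proof -
  have "\<And>k. k < n \<Longrightarrow> lam (Suc (Suc k)) \<le> mu (Suc k) \<and> mu (Suc k) \<le> lam (Suc k)"
    using mu unfolding Box_def by auto
  thus ?thesis unfolding bphi_def BS_def bx_def PiE_def extensional_def by force
qed

lemma Box_bij3: assumes m: "m \<in> BS lam n" shows "bphi n (bpsi n m) = m"
proof
  have mk: "\<And>k. k < n \<Longrightarrow> bx lam n (Suc k) \<le> m k \<and> m k < bx lam n k"
    and me: "\<And>k. n \<le> k \<Longrightarrow> m k = undefined"
    using m unfolding BS_def PiE_def extensional_def by auto
  fix k show "bphi n (bpsi n m) k = m k"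
  proof (cases "k < n")
    case True
    then show ?thesis using mk[OF True] unfolding bphi_def bpsi_def bx_def by auto
  next
    case False
    then show ?thesis using me[of k] unfolding bphi_def by auto
  qed
qed

lemma Box_bij4: assumes m: "m \<in> BS lam n" shows "bpsi n m \<in> Box n lam"
proof -
  have mk: "\<And>k. k < n \<Longrightarrow> bx lam n (Suc k) \<le> m k \<and> m k < bx lam n k"
    using m unfolding BS_def PiE_def by auto
  have "\<forall>i. (i = 0 \<or> n < i) \<longrightarrow> bpsi n m i = 0" unfolding bpsi_def by auto
  moreover have "\<forall>i\<in>{1..n}. lam (Suc i) \<le> bpsi n m i \<and> bpsi n m i \<le> lam i"
  proof
    fix i assume i: "i \<in> {1..n}"
    then obtain k where k: "i = Suc k" "k < n" by (cases i) auto
    have "int (lam (Suc (Suc k))) + int n - int (Suc k) \<le> m k" "m k < int (lam (Suc k)) + int n - int k"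
      using mk[OF k(2)] unfolding bx_def by auto
    moreover have "bpsi n m i = nat (m k - int n + int (Suc k))" unfolding bpsi_def using i k by auto
    ultimately show "lam (Suc i) \<le> bpsi n m i \<and> bpsi n m i \<le> lam i" unfolding k by linarith
  qed
  ultimately show ?thesis unfolding Box_def by blast
qed

lemma P_rec:
  assumes mono: "\<forall>i. 1 \<le> i \<longrightarrow> i \<le> n \<longrightarrow> lam (Suc i) \<le> lam i"
  shows "P (Suc n) lam = (\<Sum>mu\<in>Box n lam. P n mu)"
proof -
  define x where "x = bx lam n"
  define phi where "phi = bphi n"
  define psi where "psi = bpsi n"
  define S where "S = BS lam n"
  note bij = Box_bij1[of _ n lam, folded phi_def psi_def] Box_bij2[of _ n lam, folded phi_def S_def]
    Box_bij3[of _ lam n, folded phi_def psi_def S_def] Box_bij4[of _ lam n, folded psi_def S_def]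
  have xmono: "\<forall>i<n. x (Suc i) \<le> x i"
  proof (intro allI impI)
    fix i assume "i < n"
    hence "lam (Suc (Suc i)) \<le> lam (Suc i)" using mono by auto
    thus "x (Suc i) \<le> x i" unfolding x_def bx_def by simp
  qed
  have X: "xs (Suc n) lam = (\<lambda>k. of_int (x k))" unfolding xs_def x_def bx_def by auto
  define s where "s = (\<lambda>n. \<Sum>i<n::nat. i)"
  have sSuc: "s (Suc n) = s n + n" unfolding s_def by simp
  have "P (Suc n) lam = (-1) ^ s (Suc n) * det (Vm (Suc n) (\<lambda>k. of_int (x k)))"
    unfolding P_dvd X vandermonde dvd'_vdm s_def by simp
  also have "det (Vm (Suc n) (\<lambda>k. of_int (x k))) = (-1)^n * (\<Sum>m\<in>S. det (Vm n (\<lambda>i. of_int (m i))))"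
  proof -
    have h: "(\<Sum>m\<in>S. det (Vm n (\<lambda>i. of_int (m i)))) = (-1)^n * det (Vm (Suc n) (\<lambda>k. of_int (x k)))"
      using box_det[OF xmono] unfolding S_def BS_def x_def by simp
    have "((-1::real)^n) * (-1)^n = 1" by (simp add: power_add[symmetric] flip: mult_2)
    thus ?thesis unfolding h by (metis mult.assoc mult_1)
  qed
  also have "(\<Sum>m\<in>S. det (Vm n (\<lambda>i. of_int (m i)))) = (-1) ^ s n * (\<Sum>m\<in>S. dvd' n (\<lambda>i. of_int (m i)) / sf n)"
    unfolding vandermonde vdm_dvd' s_def by (simp add: sum_distrib_left)
  finally have "P (Suc n) lam = ((-1) ^ (s n + n) * (-1) ^ n * (-1) ^ s n) * (\<Sum>m\<in>S. dvd' n (\<lambda>i. of_int (m i)) / sf n)"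
    unfolding sSuc by simp
  also have "((-1::real) ^ (s n + n) * (-1) ^ n * (-1) ^ s n) = 1"
  proof -
    have "((-1::real) ^ (s n + n) * (-1) ^ n * (-1) ^ s n) = (-1) ^ (2 * (s n + n))"
      by (simp only: power_add[symmetric]) (simp add: algebra_simps mult_2)
    thus ?thesis by (simp only: power_mult) simp
  qed
  also have "(\<Sum>m\<in>S. dvd' n (\<lambda>i. of_int (m i)) / sf n) = (\<Sum>mu\<in>Box n lam. P n mu)"
  proof (rule sum.reindex_bij_witness[where i=phi and j=psi])
    fix m assume m: "m \<in> S"
    thus "phi (psi m) = m" "psi m \<in> Box n lam" using bij by auto
    have "P n (psi m) = dvd' n (\<lambda>i. real_of_int (phi (psi m) i)) / sf n"
      unfolding P_dvd by (rule arg_cong[where f = "\<lambda>z. z / sf n"], rule dvd'_cong, simp add: phi_def bphi_def xs_def)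
    thus "P n (psi m) = dvd' n (\<lambda>i. real_of_int (m i)) / sf n" using \<open>phi (psi m) = m\<close> by simp
  next
    fix mu assume mu: "mu \<in> Box n lam"
    thus "psi (phi mu) = mu" "phi mu \<in> S" using bij by auto
  qed
  finally show ?thesis by simp
qed

lemma Box_finite: "finite (Box n lam)"
proof -
  have "Box n lam \<subseteq> bpsi n ` BS lam n"
  proof
    fix mu assume "mu \<in> Box n lam"
    thus "mu \<in> bpsi n ` BS lam n" using Box_bij1 Box_bij2 by (metis image_eqI)
  qed
  moreover have "finite (BS lam n)" unfolding BS_def by (rule finite_PiE, auto)
  ultimately show ?thesis by (rule finite_subset[OF _ finite_imageI])
qed

lemma young_cells_Sigma: "young_cells T lam = Sigma {1..T} (\<lambda>r. {1..lam r})"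
  unfolding young_cells_def by auto

lemma finite_young: "finite (young_cells T lam)"
  unfolding young_cells_Sigma by auto

lemma finite_ssyt: "finite (ssyt T lam)"
proof -
  let ?A = "young_cells T lam"
  let ?f = "\<lambda>tab. restrict (\<lambda>p. tab (fst p) (snd p)) ?A"
  have inj: "inj_on ?f (ssyt T lam)"
  proof
    fix t1 t2 assume t1: "t1 \<in> ssyt T lam" and t2: "t2 \<in> ssyt T lam" and eq: "?f t1 = ?f t2"
    show "t1 = t2"
    proof (intro ext)
      fix r c show "t1 r c = t2 r c"
      proof (cases "(r,c) \<in> ?A")
        case True
        then show ?thesis using fun_cong[OF eq, of "(r,c)"] by simp
      next
        case False
        then show ?thesis using t1 t2 unfolding ssyt_def by auto
      qed
    qed
  qed
  have "?f ` ssyt T lam \<subseteq> PiE ?A (\<lambda>_. {..T})"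
    unfolding ssyt_def by auto
  moreover have "finite (PiE ?A (\<lambda>_. {..T}))" by (rule finite_PiE[OF finite_young], auto)
  ultimately have "finite (?f ` ssyt T lam)" by (rule finite_subset)
  thus ?thesis using finite_imageD[OF _ inj] by blast
qed

lemma ssyt_0: "ssyt 0 lam = {\<lambda>r c. 0}"
  unfolding ssyt_def young_cells_def by auto

lemma prefix_card:
  assumes S: "\<And>c. c \<in> S \<longleftrightarrow> (1 \<le> c \<and> c \<le> L \<and> Q c)"
    and down: "\<And>c c'. 1 \<le> c' \<Longrightarrow> c' \<le> c \<Longrightarrow> c \<le> L \<Longrightarrow> Q c \<Longrightarrow> Q c'"
  shows "S = {1..card S}"
proof (cases "S = {}")
  case True then show ?thesis by simp
next
  case False
  have fin: "finite S" using S by (metis finite_atLeastAtMost finite_subset subsetI atLeastAtMost_iff)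
  define m where "m = Max S"
  have mS: "m \<in> S" unfolding m_def using Max_in[OF fin False] .
  have "S = {1..m}"
  proof
    show "S \<subseteq> {1..m}" using S Max_ge[OF fin] unfolding m_def by auto
    show "{1..m} \<subseteq> S"
    proof
      fix c assume c: "c \<in> {1..m}"
      have "1 \<le> m \<and> m \<le> L \<and> Q m" using mS S by blast
      thus "c \<in> S" using c down[of c m] S by auto
    qed
  qed
  thus ?thesis by simp
qed

context
  fixes T :: nat and lam :: "nat \<Rightarrow> nat" and tab :: "nat \<Rightarrow> nat \<Rightarrow> nat"
  assumes tab: "tab \<in> ssyt T lam"
begin

lemma tab_out: "(r, c) \<notin> young_cells T lam \<Longrightarrow> tab r c = 0"
  using tab unfolding ssyt_def by auto

lemma tab_range: "(r, c) \<in> young_cells T lam \<Longrightarrow> 1 \<le> tab r c \<and> tab r c \<le> T"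
  using tab unfolding ssyt_def by auto

lemma tab_row: "(r, c) \<in> young_cells T lam \<Longrightarrow> (r, Suc c) \<in> young_cells T lam \<Longrightarrow> tab r c \<le> tab r (Suc c)"
  using tab unfolding ssyt_def by auto

lemma tab_col: "(r, c) \<in> young_cells T lam \<Longrightarrow> (Suc r, c) \<in> young_cells T lam \<Longrightarrow> tab r c < tab (Suc r) c"
  using tab unfolding ssyt_def by auto

lemma tab_row_mono:
  assumes "(r, c) \<in> young_cells T lam" "1 \<le> c'" "c' \<le> c"
  shows "tab r c' \<le> tab r c"
proof -
  obtain d where d: "c = c' + d" using assms(3) le_Suc_ex by blast
  have "(r, c' + d) \<in> young_cells T lam \<Longrightarrow> tab r c' \<le> tab r (c' + d)"
  proof (induction d)
    case 0 then show ?case by simp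
  next
    case (Suc d)
    have c1: "(r, c' + d) \<in> young_cells T lam" using Suc.prems assms(2) unfolding young_cells_def by auto
    have "tab r (c' + d) \<le> tab r (Suc (c' + d))"
      by (rule tab_row[OF c1], use Suc.prems in simp)
    then show ?case using Suc.IH[OF c1] by simp
  qed
  thus ?thesis using assms(1) d by simp
qed

lemma tab_ge_row:
  assumes dec: "\<And>i. 1 \<le> i \<Longrightarrow> Suc i \<le> T \<Longrightarrow> lam (Suc i) \<le> lam i"
  shows "(r, c) \<in> young_cells T lam \<Longrightarrow> r \<le> tab r c"
proof (induction r)
  case 0 then show ?case by simp
next
  case (Suc r)
  show ?case
  proof (cases "r = 0")
    case True then show ?thesis using tab_range[OF Suc.prems] by simp
  next
    case False
    have c: "(r, c) \<in> young_cells T lam"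
      using Suc.prems dec[of r] False unfolding young_cells_def by auto
    show ?thesis using Suc.IH[OF c] tab_col[OF c Suc.prems] by simp
  qed
qed

end

definition low :: "nat \<Rightarrow> (nat \<Rightarrow> nat) \<Rightarrow> (nat \<Rightarrow> nat \<Rightarrow> nat) \<Rightarrow> nat \<Rightarrow> nat set" where
  "low n lam tab i = {c. 1 \<le> c \<and> c \<le> lam i \<and> tab i c \<le> n}"
definition shp :: "nat \<Rightarrow> (nat \<Rightarrow> nat) \<Rightarrow> (nat \<Rightarrow> nat \<Rightarrow> nat) \<Rightarrow> nat \<Rightarrow> nat" where
  "shp n lam tab i = (if 1 \<le> i \<and> i \<le> n then card (low n lam tab i) else 0)"
definition cut :: "nat \<Rightarrow> (nat \<Rightarrow> nat \<Rightarrow> nat) \<Rightarrow> nat \<Rightarrow> nat \<Rightarrow> nat" where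
  "cut n tab r c = (if r \<le> n \<and> tab r c \<le> n then tab r c else 0)"
definition glue :: "nat \<Rightarrow> (nat \<Rightarrow> nat) \<Rightarrow> (nat \<Rightarrow> nat) \<Rightarrow> (nat \<Rightarrow> nat \<Rightarrow> nat) \<Rightarrow> nat \<Rightarrow> nat \<Rightarrow> nat" where
  "glue n lam mu t r c = (if (r, c) \<in> young_cells (Suc n) lam then (if r \<le> n \<and> c \<le> mu r then t r c else Suc n) else 0)"

context
  fixes n :: nat and lam :: "nat \<Rightarrow> nat"
  assumes dec: "\<And>i. 1 \<le> i \<Longrightarrow> i \<le> n \<Longrightarrow> lam (Suc i) \<le> lam i"
begin

lemma low_prefix:
  assumes tab: "tab \<in> ssyt (Suc n) lam" and i: "1 \<le> i" "i \<le> n"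
  shows "c \<in> low n lam tab i \<longleftrightarrow> 1 \<le> c \<and> c \<le> shp n lam tab i"
proof -
  have L: "low n lam tab i = {1..card (low n lam tab i)}"
  proof (rule prefix_card[where L = "lam i" and Q = "\<lambda>c. tab i c \<le> n"])
    show "\<And>c. c \<in> low n lam tab i \<longleftrightarrow> (1 \<le> c \<and> c \<le> lam i \<and> tab i c \<le> n)" unfolding low_def by (rule mem_Collect_eq)
  next
    fix c c' assume a: "1 \<le> c'" "c' \<le> c" "c \<le> lam i" "tab i c \<le> n"
    have "(i, c) \<in> young_cells (Suc n) lam" using i a unfolding young_cells_def by simp
    hence "tab i c' \<le> tab i c" using tab_row_mono[OF tab, of i c c'] a by blast
    thus "tab i c' \<le> n" using a(4) by (rule le_trans)
  qed
  have S: "shp n lam tab i = card (low n lam tab i)" using i unfolding shp_def by simp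
  show ?thesis by (subst L, unfold S, rule atLeastAtMost_iff)
qed

lemma finite_low: "finite (low n lam tab i)"
  by (rule finite_subset[of _ "{1..lam i}"]) (auto simp: low_def)

lemma shp_Box:
  assumes tab: "tab \<in> ssyt (Suc n) lam"
  shows "shp n lam tab \<in> Box n lam"
proof -
  have A: "\<forall>i. (i = 0 \<or> n < i) \<longrightarrow> shp n lam tab i = 0" unfolding shp_def by auto
  have B: "\<forall>i\<in>{1..n}. lam (Suc i) \<le> shp n lam tab i \<and> shp n lam tab i \<le> lam i"
  proof
    fix i assume i: "i \<in> {1..n}"
    have "low n lam tab i \<subseteq> {1..lam i}" unfolding low_def by auto
    hence "card (low n lam tab i) \<le> card {1..lam i}" by (intro card_mono) auto
    hence "card (low n lam tab i) \<le> lam i" by simp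
    moreover have "{1..lam (Suc i)} \<subseteq> low n lam tab i"
    proof
      fix c assume c: "c \<in> {1..lam (Suc i)}"
      have c1: "(i, c) \<in> young_cells (Suc n) lam" using c i dec[of i] unfolding young_cells_def by auto
      have c2: "(Suc i, c) \<in> young_cells (Suc n) lam" using c i unfolding young_cells_def by auto
      have "tab i c < tab (Suc i) c" by (rule tab_col[OF tab c1 c2])
      moreover have "tab (Suc i) c \<le> Suc n" using tab_range[OF tab c2] by simp
      ultimately show "c \<in> low n lam tab i" using c1 unfolding low_def young_cells_def by auto
    qed
    hence "card {1..lam (Suc i)} \<le> card (low n lam tab i)"
      by (intro card_mono finite_low)
    hence "lam (Suc i) \<le> card (low n lam tab i)" by simp
    ultimately show "lam (Suc i) \<le> shp n lam tab i \<and> shp n lam tab i \<le> lam i"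
      using i unfolding shp_def by auto
  qed
  show ?thesis unfolding Box_def using A B by blast
qed

lemma cut_cells:
  assumes tab: "tab \<in> ssyt (Suc n) lam"
  shows "(r, c) \<in> young_cells n (shp n lam tab) \<longleftrightarrow> (1 \<le> r \<and> r \<le> n \<and> (r, c) \<in> young_cells (Suc n) lam \<and> tab r c \<le> n)"
proof (cases "1 \<le> r \<and> r \<le> n")
  case True
  have lp: "c \<in> low n lam tab r \<longleftrightarrow> 1 \<le> c \<and> c \<le> shp n lam tab r"
    using low_prefix[OF tab, of r c] True by blast
  have e1: "(r,c) \<in> young_cells n (shp n lam tab) \<longleftrightarrow> 1 \<le> c \<and> c \<le> shp n lam tab r"
    using True by (simp add: young_cells_def)
  have e2: "c \<in> low n lam tab r \<longleftrightarrow> 1 \<le> c \<and> c \<le> lam r \<and> tab r c \<le> n" by (simp add: low_def)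
  have e3: "(r,c) \<in> young_cells (Suc n) lam \<longleftrightarrow> 1 \<le> c \<and> c \<le> lam r"
    using True by (simp add: young_cells_def)
  show ?thesis using lp e1 e2 e3 True by blast
next
  case False
  then show ?thesis by (auto simp: young_cells_def)
qed

lemma cut_ssyt:
  assumes tab: "tab \<in> ssyt (Suc n) lam"
  shows "cut n tab \<in> ssyt n (shp n lam tab)"
proof -
  note K = cut_cells[OF tab]
  show ?thesis unfolding ssyt_def
  proof (intro CollectI conjI allI impI ballI)
    fix r c assume "(r, c) \<notin> young_cells n (shp n lam tab)"
    hence "\<not> (1 \<le> r \<and> r \<le> n \<and> (r, c) \<in> young_cells (Suc n) lam \<and> tab r c \<le> n)" using K by blast
    moreover have "(r, c) \<notin> young_cells (Suc n) lam \<Longrightarrow> tab r c = 0" by (rule tab_out[OF tab])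
    moreover have "r = 0 \<Longrightarrow> (r, c) \<notin> young_cells (Suc n) lam" unfolding young_cells_def by auto
    ultimately show "cut n tab r c = 0" unfolding cut_def by (cases "r = 0") auto
  next
    fix p assume p: "p \<in> young_cells n (shp n lam tab)"
    obtain r c where rc: "p = (r, c)" by (cases p)
    have "1 \<le> r \<and> r \<le> n \<and> (r, c) \<in> young_cells (Suc n) lam \<and> tab r c \<le> n" using K p rc by blast
    thus "case p of (r, c) \<Rightarrow> 1 \<le> cut n tab r c \<and> cut n tab r c \<le> n"
      using tab_range[OF tab, of r c] rc unfolding cut_def by auto
  next
    fix p assume p: "p \<in> young_cells n (shp n lam tab)"
    obtain r c where rc: "p = (r, c)" by (cases p)
    have h1: "1 \<le> r \<and> r \<le> n \<and> (r, c) \<in> young_cells (Suc n) lam \<and> tab r c \<le> n" using K p rc by blast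
    show "case p of (r, c) \<Rightarrow> (r, c + 1) \<in> young_cells n (shp n lam tab) \<longrightarrow> cut n tab r c \<le> cut n tab r (c + 1)"
    proof (simp only: rc prod.case, intro impI)
      assume "(r, c + 1) \<in> young_cells n (shp n lam tab)"
      hence h2: "1 \<le> r \<and> r \<le> n \<and> (r, Suc c) \<in> young_cells (Suc n) lam \<and> tab r (Suc c) \<le> n" using K by simp
      show "cut n tab r c \<le> cut n tab r (c + 1)" using h1 h2 tab_row[OF tab, of r c] unfolding cut_def by auto
    qed
  next
    fix p assume p: "p \<in> young_cells n (shp n lam tab)"
    obtain r c where rc: "p = (r, c)" by (cases p)
    have h1: "1 \<le> r \<and> r \<le> n \<and> (r, c) \<in> young_cells (Suc n) lam \<and> tab r c \<le> n" using K p rc by blast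
    show "case p of (r, c) \<Rightarrow> (r + 1, c) \<in> young_cells n (shp n lam tab) \<longrightarrow> cut n tab r c < cut n tab (r + 1) c"
    proof (simp only: rc prod.case, intro impI)
      assume "(r + 1, c) \<in> young_cells n (shp n lam tab)"
      hence h2: "1 \<le> Suc r \<and> Suc r \<le> n \<and> (Suc r, c) \<in> young_cells (Suc n) lam \<and> tab (Suc r) c \<le> n" using K by simp
      show "cut n tab r c < cut n tab (r + 1) c" using h1 h2 tab_col[OF tab, of r c] unfolding cut_def by auto
    qed
  qed
qed

lemma glue_ssyt:
  assumes mu: "mu \<in> Box n lam" and t: "t \<in> ssyt n mu"
  shows "glue n lam mu t \<in> ssyt (Suc n) lam"
proof -
  have mub: "\<And>i. 1 \<le> i \<Longrightarrow> i \<le> n \<Longrightarrow> lam (Suc i) \<le> mu i \<and> mu i \<le> lam i" using mu unfolding Box_def by auto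
  have mucell: "\<And>r c. (r, c) \<in> young_cells (Suc n) lam \<Longrightarrow> r \<le> n \<Longrightarrow> c \<le> mu r \<Longrightarrow> (r, c) \<in> young_cells n mu"
    unfolding young_cells_def by auto
  show ?thesis unfolding ssyt_def
  proof (intro CollectI conjI allI impI ballI)
    fix r c assume "(r, c) \<notin> young_cells (Suc n) lam" thus "glue n lam mu t r c = 0" unfolding glue_def by auto
  next
    fix p assume p: "p \<in> young_cells (Suc n) lam"
    obtain r c where rc: "p = (r, c)" by (cases p)
    show "case p of (r, c) \<Rightarrow> 1 \<le> glue n lam mu t r c \<and> glue n lam mu t r c \<le> Suc n"
      using p rc mucell[of r c] tab_range[OF t, of r c] unfolding glue_def by auto
  next
    fix p assume p: "p \<in> young_cells (Suc n) lam"
    obtain r c where rc: "p = (r, c)" by (cases p)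
    show "case p of (r, c) \<Rightarrow> (r, c + 1) \<in> young_cells (Suc n) lam \<longrightarrow> glue n lam mu t r c \<le> glue n lam mu t r (c + 1)"
    proof (simp only: rc prod.case, intro impI)
      assume c2: "(r, c + 1) \<in> young_cells (Suc n) lam"
      have c1: "(r, c) \<in> young_cells (Suc n) lam" using p rc by simp
      show "glue n lam mu t r c \<le> glue n lam mu t r (c + 1)"
      proof (cases "r \<le> n \<and> c + 1 \<le> mu r")
        case True
        then show ?thesis using c1 c2 mucell[of r c] mucell[of r "c+1"] tab_row[OF t, of r c] unfolding glue_def by auto
      next
        case False
        then show ?thesis using c1 c2 mucell[of r c] tab_range[OF t, of r c] unfolding glue_def by auto
      qed
    qed
  next
    fix p assume p: "p \<in> young_cells (Suc n) lam"
    obtain r c where rc: "p = (r, c)" by (cases p)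
    show "case p of (r, c) \<Rightarrow> (r + 1, c) \<in> young_cells (Suc n) lam \<longrightarrow> glue n lam mu t r c < glue n lam mu t (r + 1) c"
    proof (simp only: rc prod.case, intro impI)
      assume c2: "(r + 1, c) \<in> young_cells (Suc n) lam"
      have c1: "(r, c) \<in> young_cells (Suc n) lam" using p rc by simp
      have r: "1 \<le> r" "r \<le> n" using c1 c2 unfolding young_cells_def by auto
      have "c \<le> mu r" using mub[OF r] c2 unfolding young_cells_def by auto
      hence g1: "glue n lam mu t r c = t r c" and m1: "(r, c) \<in> young_cells n mu"
        using c1 r mucell[of r c] unfolding glue_def by auto
      show "glue n lam mu t r c < glue n lam mu t (r + 1) c"
      proof (cases "r + 1 \<le> n \<and> c \<le> mu (r + 1)")
        case True
        then show ?thesis using g1 c2 mucell[of "r+1" c] tab_col[OF t m1] unfolding glue_def by auto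
      next
        case False
        then show ?thesis using g1 c2 tab_range[OF t m1] unfolding glue_def by auto
      qed
    qed
  qed
qed

lemma glue_shp_cut:
  assumes tab: "tab \<in> ssyt (Suc n) lam"
  shows "glue n lam (shp n lam tab) (cut n tab) = tab"
proof (intro ext)
  fix r c
  show "glue n lam (shp n lam tab) (cut n tab) r c = tab r c"
  proof (cases "(r, c) \<in> young_cells (Suc n) lam")
    case False
    then show ?thesis using tab_out[OF tab False] unfolding glue_def by auto
  next
    case True
    have r1: "1 \<le> r" "r \<le> Suc n" "1 \<le> c" "c \<le> lam r" using True unfolding young_cells_def by auto
    have rng: "1 \<le> tab r c \<and> tab r c \<le> Suc n" by (rule tab_range[OF tab True])
    show ?thesis
    proof (cases "r \<le> n")
      case rn: True
      show ?thesis
      proof (cases "c \<le> shp n lam tab r")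
        case True
        hence "c \<in> low n lam tab r" using low_prefix[OF tab r1(1) rn] r1 by auto
        hence "tab r c \<le> n" unfolding low_def by auto
        then show ?thesis using True rn \<open>(r, c) \<in> young_cells (Suc n) lam\<close> unfolding glue_def cut_def by auto
      next
        case False
        hence "c \<notin> low n lam tab r" using low_prefix[OF tab r1(1) rn] r1 by auto
        hence "\<not> tab r c \<le> n" using r1 unfolding low_def by auto
        then show ?thesis using False rng \<open>(r, c) \<in> young_cells (Suc n) lam\<close> unfolding glue_def by auto
      qed
    next
      case False
      hence "r = Suc n" using r1 by auto
      moreover have "r \<le> tab r c"
        by (rule tab_ge_row[OF tab _ True], rule dec, auto)
      ultimately show ?thesis using False rng \<open>(r, c) \<in> young_cells (Suc n) lam\<close> unfolding glue_def by auto
    qed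
  qed
qed

lemma shp_cut_glue:
  assumes mu: "mu \<in> Box n lam" and t: "t \<in> ssyt n mu"
  shows "shp n lam (glue n lam mu t) = mu" "cut n (glue n lam mu t) = t"
proof -
  have mub: "\<And>i. 1 \<le> i \<Longrightarrow> i \<le> n \<Longrightarrow> lam (Suc i) \<le> mu i \<and> mu i \<le> lam i" using mu unfolding Box_def by auto
  have mu0: "\<And>i. i = 0 \<or> n < i \<Longrightarrow> mu i = 0" using mu unfolding Box_def by auto
  show "shp n lam (glue n lam mu t) = mu"
  proof (intro ext)
    fix i show "shp n lam (glue n lam mu t) i = mu i"
    proof (cases "1 \<le> i \<and> i \<le> n")
      case True
      have "low n lam (glue n lam mu t) i = {1..mu i}"
      proof (rule Set.set_eqI)
        fix c
        show "c \<in> low n lam (glue n lam mu t) i \<longleftrightarrow> c \<in> {1..mu i}"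
        proof
          assume "c \<in> low n lam (glue n lam mu t) i"
          hence c: "1 \<le> c" "c \<le> lam i" "glue n lam mu t i c \<le> n" unfolding low_def by auto
          show "c \<in> {1..mu i}"
          proof (rule ccontr)
            assume "c \<notin> {1..mu i}"
            hence "\<not> c \<le> mu i" using c by auto
            moreover have "(i, c) \<in> young_cells (Suc n) lam" using c True unfolding young_cells_def by auto
            ultimately have "glue n lam mu t i c = Suc n" unfolding glue_def by auto
            thus False using c by simp
          qed
        next
          assume c: "c \<in> {1..mu i}"
          hence "(i, c) \<in> young_cells n mu" using True unfolding young_cells_def by auto
          moreover have "(i, c) \<in> young_cells (Suc n) lam" using c True mub[of i] unfolding young_cells_def by auto
          ultimately show "c \<in> low n lam (glue n lam mu t) i"
            using c True mub[of i] tab_range[OF t, of i c] unfolding low_def glue_def by auto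
        qed
      qed
      then show ?thesis using True unfolding shp_def by simp
    next
      case False
      then show ?thesis using mu0[of i] unfolding shp_def by auto
    qed
  qed
  show "cut n (glue n lam mu t) = t"
  proof (intro ext)
    fix r c
    show "cut n (glue n lam mu t) r c = t r c"
    proof (cases "(r, c) \<in> young_cells n mu")
      case True
      hence r: "1 \<le> r" "r \<le> n" "1 \<le> c" "c \<le> mu r" unfolding young_cells_def by auto
      hence "(r, c) \<in> young_cells (Suc n) lam" using mub[of r] unfolding young_cells_def by auto
      then show ?thesis using r tab_range[OF t True] unfolding cut_def glue_def by auto
    next
      case False
      have t0: "t r c = 0" by (rule tab_out[OF t False])
      have "\<not> (r \<le> n \<and> glue n lam mu t r c \<le> n) \<or> glue n lam mu t r c = 0"
        using False t0 unfolding glue_def young_cells_def by auto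
      then show ?thesis using t0 unfolding cut_def by auto
    qed
  qed
qed

lemma card_ssyt_rec: "card (ssyt (Suc n) lam) = (\<Sum>mu\<in>Box n lam. card (ssyt n mu))"
proof -
  have "bij_betw (\<lambda>tab. (shp n lam tab, cut n tab)) (ssyt (Suc n) lam) (Sigma (Box n lam) (ssyt n))"
  proof (rule bij_betw_byWitness[where f' = "\<lambda>(mu, t). glue n lam mu t"])
    show "\<forall>a\<in>ssyt (Suc n) lam. (\<lambda>(mu, t). glue n lam mu t) (shp n lam a, cut n a) = a"
      using glue_shp_cut by auto
    show "\<forall>a'\<in>Sigma (Box n lam) (ssyt n). (shp n lam ((\<lambda>(mu, t). glue n lam mu t) a'), cut n ((\<lambda>(mu, t). glue n lam mu t) a')) = a'"
      using shp_cut_glue by auto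
    show "(\<lambda>tab. (shp n lam tab, cut n tab)) ` ssyt (Suc n) lam \<subseteq> Sigma (Box n lam) (ssyt n)"
      using shp_Box cut_ssyt by auto
    show "(\<lambda>(mu, t). glue n lam mu t) ` Sigma (Box n lam) (ssyt n) \<subseteq> ssyt (Suc n) lam"
      using glue_ssyt by auto
  qed
  hence "card (ssyt (Suc n) lam) = card (Sigma (Box n lam) (ssyt n))" by (rule bij_betw_same_card)
  also have "\<dots> = (\<Sum>mu\<in>Box n lam. card (ssyt n mu))"
    by (rule card_SigmaI, rule Box_finite, simp add: finite_ssyt)
  finally show ?thesis .
qed

end

lemma strict_mono_adj:
  fixes h :: "nat \<Rightarrow> nat"
  assumes adj: "\<And>r. 1 \<le> r \<Longrightarrow> r < L \<Longrightarrow> h r < h (Suc r)"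
    and r: "1 \<le> r'" "r' \<le> r" "r \<le> L"
  shows "h r' \<le> h r" "r' < r \<Longrightarrow> h r' < h r"
proof -
  obtain d where d: "r = r' + d" using r(2) le_Suc_ex by blast
  have "r' + d \<le> L \<Longrightarrow> h r' \<le> h (r' + d) \<and> (0 < d \<longrightarrow> h r' < h (r' + d))"
  proof (induction d)
    case 0 then show ?case by simp
  next
    case (Suc d)
    have "h (r' + d) < h (Suc (r' + d))" using adj[of "r' + d"] Suc.prems r(1) by simp
    then show ?case using Suc by auto
  qed
  thus "h r' \<le> h r" "r' < r \<Longrightarrow> h r' < h r" using d r by auto
qed

definition cntf :: "nat \<Rightarrow> (nat \<Rightarrow> nat) \<Rightarrow> nat \<Rightarrow> nat" where
  "cntf L h t = card {r. 1 \<le> r \<and> r \<le> L \<and> h r \<le> t}"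

context
  fixes L :: nat and h :: "nat \<Rightarrow> nat"
  assumes adj: "\<And>r. 1 \<le> r \<Longrightarrow> r < L \<Longrightarrow> h r < h (Suc r)"
begin

lemma cnt_prefix: "1 \<le> r \<Longrightarrow> r \<le> L \<Longrightarrow> h r \<le> t \<longleftrightarrow> r \<le> cntf L h t"
proof -
  assume r: "1 \<le> r" "r \<le> L"
  have P: "{r. 1 \<le> r \<and> r \<le> L \<and> h r \<le> t} = {1..card {r. 1 \<le> r \<and> r \<le> L \<and> h r \<le> t}}"
  proof (rule prefix_card[where L = L and Q = "\<lambda>r. h r \<le> t"])
    show "\<And>c. c \<in> {r. 1 \<le> r \<and> r \<le> L \<and> h r \<le> t} \<longleftrightarrow> (1 \<le> c \<and> c \<le> L \<and> h c \<le> t)" by (rule mem_Collect_eq)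
  next
    fix c c' assume a: "1 \<le> c'" "c' \<le> c" "c \<le> L" "h c \<le> t"
    have "h c' \<le> h c" by (rule strict_mono_adj(1)[where h=h and L=L, OF adj a(1-3)])
    thus "h c' \<le> t" using a(4) by (rule le_trans)
  qed
  have "h r \<le> t \<longleftrightarrow> r \<in> {r. 1 \<le> r \<and> r \<le> L \<and> h r \<le> t}" using r by simp
  also have "\<dots> \<longleftrightarrow> r \<le> cntf L h t" unfolding cntf_def by (subst P, use r in simp)
  finally show ?thesis .
qed

lemma cnt_le: "cntf L h t \<le> L"
proof -
  have "cntf L h t \<le> card {1..L}" unfolding cntf_def by (rule card_mono) auto
  thus ?thesis by simp
qed

lemma cnt_mono: "t \<le> t' \<Longrightarrow> cntf L h t \<le> cntf L h t'"
  unfolding cntf_def by (rule card_mono) auto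

lemma cnt_step: "cntf L h (Suc t) = cntf L h t \<or> cntf L h (Suc t) = Suc (cntf L h t)"
proof (rule ccontr)
  assume a: "\<not> ?thesis"
  have m: "cntf L h t \<le> cntf L h (Suc t)" by (rule cnt_mono) simp
  define r where "r = Suc (cntf L h t)"
  have r2: "Suc r \<le> cntf L h (Suc t)" using a m unfolding r_def by auto
  have rL: "Suc r \<le> L" using r2 cnt_le[of "Suc t"] by simp
  have "h (Suc r) \<le> Suc t" using cnt_prefix[of "Suc r" "Suc t"] r2 rL by simp
  moreover have "h r < h (Suc r)" using adj[of r] rL unfolding r_def by simp
  ultimately have "h r \<le> t" by simp
  hence "r \<le> cntf L h t" using cnt_prefix[of r t] rL unfolding r_def by simp
  thus False unfolding r_def by simp
qed

lemma cnt_least: assumes r: "1 \<le> r" "r \<le> L" shows "(LEAST t. r \<le> cntf L h t) = h r"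
proof (rule Least_equality)
  show "r \<le> cntf L h (h r)" using cnt_prefix[OF r, of "h r"] by simp
next
  fix t assume "r \<le> cntf L h t"
  thus "h r \<le> t" using cnt_prefix[OF r, of t] by simp
qed

end

definition stepfun :: "nat \<Rightarrow> (nat \<Rightarrow> nat) \<Rightarrow> bool" where
  "stepfun T f = (f 0 = 0 \<and> (\<forall>t<T. f (Suc t) = f t \<or> f (Suc t) = Suc (f t)))"

lemma stepfun_mono: assumes "stepfun T f" "t \<le> t'" "t' \<le> T" shows "f t \<le> f t'"
proof -
  obtain d where d: "t' = t + d" using assms(2) le_Suc_ex by blast
  have "t + d \<le> T \<Longrightarrow> f t \<le> f (t + d)"
  proof (induction d)
    case 0 then show ?case by simp
  next
    case (Suc d)
    have "f (Suc (t + d)) = f (t + d) \<or> f (Suc (t + d)) = Suc (f (t + d))"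
      using assms(1) Suc.prems unfolding stepfun_def by auto
    then show ?case using Suc by auto
  qed
  thus ?thesis using d assms(3) by simp
qed

context
  fixes T :: nat and f :: "nat \<Rightarrow> nat" and L :: nat
  assumes sf: "stepfun T f" and fT: "f T = L"
begin

lemma lst_ex: "r \<le> L \<Longrightarrow> r \<le> f (LEAST t. r \<le> f t) \<and> (LEAST t. r \<le> f t) \<le> T"
  using LeastI[of "\<lambda>t. r \<le> f t" T] Least_le[of "\<lambda>t. r \<le> f t" T] fT by auto

lemma lst_iff: assumes "r \<le> L" "t \<le> T" shows "(LEAST t. r \<le> f t) \<le> t \<longleftrightarrow> r \<le> f t"
proof
  assume a: "(LEAST t. r \<le> f t) \<le> t"
  have "r \<le> f (LEAST t. r \<le> f t)" using lst_ex[OF assms(1)] by simp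
  also have "\<dots> \<le> f t" by (rule stepfun_mono[OF sf a assms(2)])
  finally show "r \<le> f t" .
next
  assume "r \<le> f t" thus "(LEAST t. r \<le> f t) \<le> t" by (rule Least_le)
qed

lemma lst_pos: assumes "1 \<le> r" "r \<le> L" shows "1 \<le> (LEAST t. r \<le> f t)"
proof (rule ccontr)
  assume "\<not> 1 \<le> (LEAST t. r \<le> f t)"
  hence "(LEAST t. r \<le> f t) = 0" by simp
  hence "r \<le> f 0" using lst_ex[OF assms(2)] by simp
  thus False using sf assms(1) unfolding stepfun_def by simp
qed

lemma lst_strict: assumes "1 \<le> r" "Suc r \<le> L" shows "(LEAST t. r \<le> f t) < (LEAST t. Suc r \<le> f t)"
proof -
  define t1 where "t1 = (LEAST t. Suc r \<le> f t)"
  have t1: "Suc r \<le> f t1" "t1 \<le> T" using lst_ex[OF assms(2)] unfolding t1_def by auto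
  have "1 \<le> t1" using lst_pos[of "Suc r"] assms unfolding t1_def by simp
  then obtain t0 where t0: "t1 = Suc t0" by (cases t1) auto
  have "f t1 = f t0 \<or> f t1 = Suc (f t0)" using sf t0 t1(2) unfolding stepfun_def by auto
  hence "r \<le> f t0" using t1(1) by auto
  hence "(LEAST t. r \<le> f t) \<le> t0" by (rule Least_le)
  thus ?thesis unfolding t1_def[symmetric] t0 by simp
qed

lemma cnt_lst: assumes "t \<le> T" shows "cntf L (\<lambda>r. LEAST t. r \<le> f t) t = f t"
proof -
  have "{r. 1 \<le> r \<and> r \<le> L \<and> (LEAST t. r \<le> f t) \<le> t} = {1..f t}"
  proof -
    have "f t \<le> L" using stepfun_mono[OF sf assms order.refl] fT by simp
    thus ?thesis using lst_iff[OF _ assms] by auto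
  qed
  thus ?thesis unfolding cntf_def by simp
qed

end

definition FA :: "nat \<Rightarrow> nat \<Rightarrow> (nat \<Rightarrow> nat) \<Rightarrow> (nat \<Rightarrow> nat \<Rightarrow> nat) set" where
  "FA N T Lc = {f. (\<forall>c t. \<not> (1 \<le> c \<and> c \<le> N \<and> t \<le> T) \<longrightarrow> f c t = 0) \<and>
     (\<forall>c\<in>{1..N}. stepfun T (f c) \<and> f c T = Lc c) \<and>
     (\<forall>c\<in>{1..<N}. \<forall>t\<le>T. f (Suc c) t \<le> f c t)}"

definition w2f :: "nat \<Rightarrow> nat \<Rightarrow> (nat \<Rightarrow> nat \<Rightarrow> int) \<Rightarrow> nat \<Rightarrow> nat \<Rightarrow> nat" where
  "w2f N T S c t = (if 1 \<le> c \<and> c \<le> N \<and> t \<le> T then nat ((int t + 2 * (int c - 1) - S c t) div 2) else 0)"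

definition f2w :: "nat \<Rightarrow> nat \<Rightarrow> (nat \<Rightarrow> nat \<Rightarrow> nat) \<Rightarrow> nat \<Rightarrow> nat \<Rightarrow> int" where
  "f2w N T f c t = (if 1 \<le> c \<and> c \<le> N \<and> t \<le> T then 2 * (int c - 1) + int t - 2 * int (f c t) else 0)"

context
  fixes N T :: nat and Lc :: "nat \<Rightarrow> nat" and y :: "nat \<Rightarrow> int"
  assumes ydef: "\<And>j. 1 \<le> j \<Longrightarrow> j \<le> N \<Longrightarrow> y j = int T + 2 * (int j - 1) - 2 * int (Lc j)"
begin

lemma walk_form:
  assumes S: "S \<in> vicious_walks N T y" and c: "1 \<le> c" "c \<le> N"
  shows "t \<le> T \<Longrightarrow> S c t = 2 * (int c - 1) + int t - 2 * int (w2f N T S c t)"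
proof -
  have st: "\<And>t. 1 \<le> t \<Longrightarrow> t \<le> T \<Longrightarrow> \<bar>S c t - S c (t - 1)\<bar> = 1"
    and s0: "S c 0 = 2 * (int c - 1)" using S c unfolding vicious_walks_def by auto
  have "t \<le> T \<Longrightarrow> \<exists>k. S c t = 2 * (int c - 1) + int t - 2 * int k"
  proof (induction t)
    case 0 then show ?case using s0 by (intro exI[of _ 0]) simp
  next
    case (Suc t)
    then obtain k where k: "S c t = 2 * (int c - 1) + int t - 2 * int k" by auto
    have "\<bar>S c (Suc t) - S c t\<bar> = 1" using st[of "Suc t"] Suc.prems by simp
    hence "S c (Suc t) = S c t + 1 \<or> S c (Suc t) = S c t - 1" by auto
    thus ?case
    proof
      assume "S c (Suc t) = S c t + 1" thus ?case using k by (intro exI[of _ k]) simp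
    next
      assume "S c (Suc t) = S c t - 1" thus ?case using k by (intro exI[of _ "Suc k"]) simp
    qed
  qed
  moreover assume t: "t \<le> T"
  ultimately obtain k where k: "S c t = 2 * (int c - 1) + int t - 2 * int k" by auto
  have "w2f N T S c t = k" using c t k unfolding w2f_def by simp
  thus ?thesis using k by simp
qed

lemma w2f_FA: assumes S: "S \<in> vicious_walks N T y" shows "w2f N T S \<in> FA N T Lc"
proof -
  have st: "\<And>c t. 1 \<le> c \<Longrightarrow> c \<le> N \<Longrightarrow> 1 \<le> t \<Longrightarrow> t \<le> T \<Longrightarrow> \<bar>S c t - S c (t - 1)\<bar> = 1"
    and s0: "\<And>c. 1 \<le> c \<Longrightarrow> c \<le> N \<Longrightarrow> S c 0 = 2 * (int c - 1)"
    and sT: "\<And>c. 1 \<le> c \<Longrightarrow> c \<le> N \<Longrightarrow> S c T = y c"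
    and so: "\<And>c t. 1 \<le> c \<Longrightarrow> c < N \<Longrightarrow> t \<le> T \<Longrightarrow> S c t < S (Suc c) t"
    using S unfolding vicious_walks_def by auto
  note wf = walk_form[OF S]
  have A: "\<forall>c t. \<not> (1 \<le> c \<and> c \<le> N \<and> t \<le> T) \<longrightarrow> w2f N T S c t = 0" unfolding w2f_def by auto
  have B: "\<forall>c\<in>{1..N}. stepfun T (w2f N T S c) \<and> w2f N T S c T = Lc c"
  proof
    fix c assume c: "c \<in> {1..N}"
    hence c1: "1 \<le> c" "c \<le> N" by auto
    have z: "w2f N T S c 0 = 0" using wf[OF c1, of 0] s0[OF c1] by simp
    have s: "\<forall>t<T. w2f N T S c (Suc t) = w2f N T S c t \<or> w2f N T S c (Suc t) = Suc (w2f N T S c t)"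
    proof (intro allI impI)
      fix t assume t: "t < T"
      have "\<bar>S c (Suc t) - S c t\<bar> = 1" using st[OF c1, of "Suc t"] t by simp
      thus "w2f N T S c (Suc t) = w2f N T S c t \<or> w2f N T S c (Suc t) = Suc (w2f N T S c t)"
        using wf[OF c1, of t] wf[OF c1, of "Suc t"] t by auto
    qed
    have e: "w2f N T S c T = Lc c" using wf[OF c1, of T] sT[OF c1] ydef[OF c1] by simp
    show "stepfun T (w2f N T S c) \<and> w2f N T S c T = Lc c" using z s e unfolding stepfun_def by simp
  qed
  have C: "\<forall>c\<in>{1..<N}. \<forall>t\<le>T. w2f N T S (Suc c) t \<le> w2f N T S c t"
  proof (intro ballI allI impI)
    fix c t assume c: "c \<in> {1..<N}" and t: "t \<le> T"
    have c1: "1 \<le> c" "c \<le> N" and c2: "1 \<le> Suc c" "Suc c \<le> N" using c by auto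
    show "w2f N T S (Suc c) t \<le> w2f N T S c t"
      using so[of c t] c t wf[OF c1 t] wf[OF c2 t] by simp
  qed
  show ?thesis unfolding FA_def using A B C by blast
qed

lemma f2w_walks: assumes f: "f \<in> FA N T Lc" shows "f2w N T f \<in> vicious_walks N T y"
proof -
  have fs: "\<And>c. c \<in> {1..N} \<Longrightarrow> stepfun T (f c)" and fT: "\<And>c. c \<in> {1..N} \<Longrightarrow> f c T = Lc c"
    and fo: "\<And>c t. c \<in> {1..<N} \<Longrightarrow> t \<le> T \<Longrightarrow> f (Suc c) t \<le> f c t"
    using f unfolding FA_def by auto
  show ?thesis unfolding vicious_walks_def
  proof (intro CollectI conjI allI impI ballI)
    fix i t assume "\<not> (1 \<le> i \<and> i \<le> N \<and> t \<le> T)" thus "f2w N T f i t = 0" unfolding f2w_def by auto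
  next
    fix i t assume i: "i \<in> {1..N}" and t: "t \<in> {1..T}"
    then obtain t0 where t0: "t = Suc t0" by (cases t) auto
    have "f i t = f i t0 \<or> f i t = Suc (f i t0)" using fs[OF i] t t0 unfolding stepfun_def by auto
    thus "\<bar>f2w N T f i t - f2w N T f i (t - 1)\<bar> = 1" using i t t0 unfolding f2w_def by auto
  next
    fix i assume i: "i \<in> {1..N}"
    thus "f2w N T f i 0 = 2 * (int i - 1)" using fs[OF i] unfolding f2w_def stepfun_def by simp
  next
    fix i assume i: "i \<in> {1..N}"
    thus "f2w N T f i T = y i" using fT[OF i] ydef[of i] unfolding f2w_def by simp
  next
    fix t i assume t: "t \<in> {0..T}" and i: "i \<in> {1..<N}"
    have "f (Suc i) t \<le> f i t" using fo[OF i] t by simp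
    thus "f2w N T f i t < f2w N T f (i + 1) t" using i t unfolding f2w_def by auto
  qed
qed

lemma w2f_f2w: assumes f: "f \<in> FA N T Lc" shows "w2f N T (f2w N T f) = f"
proof (intro ext)
  fix c t
  have f0: "\<not> (1 \<le> c \<and> c \<le> N \<and> t \<le> T) \<Longrightarrow> f c t = 0" using f unfolding FA_def by auto
  show "w2f N T (f2w N T f) c t = f c t"
    using f0 unfolding w2f_def f2w_def by auto
qed

lemma f2w_w2f: assumes S: "S \<in> vicious_walks N T y" shows "f2w N T (w2f N T S) = S"
proof (intro ext)
  fix c t
  have S0: "\<not> (1 \<le> c \<and> c \<le> N \<and> t \<le> T) \<Longrightarrow> S c t = 0" using S unfolding vicious_walks_def by auto
  show "f2w N T (w2f N T S) c t = S c t"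
  proof (cases "1 \<le> c \<and> c \<le> N \<and> t \<le> T")
    case True then show ?thesis using walk_form[OF S, of c t] unfolding f2w_def by simp
  next
    case False then show ?thesis using S0 False unfolding f2w_def by auto
  qed
qed

lemma card_walks_FA: "card (vicious_walks N T y) = card (FA N T Lc)"
proof (rule bij_betw_same_card)
  show "bij_betw (w2f N T) (vicious_walks N T y) (FA N T Lc)"
    by (rule bij_betw_byWitness[where f' = "f2w N T"], use w2f_f2w f2w_w2f w2f_FA f2w_walks in auto)
qed

end

definition tab2f :: "nat \<Rightarrow> nat \<Rightarrow> (nat \<Rightarrow> nat) \<Rightarrow> (nat \<Rightarrow> nat \<Rightarrow> nat) \<Rightarrow> nat \<Rightarrow> nat \<Rightarrow> nat" where
  "tab2f N T Lc tab c t = (if 1 \<le> c \<and> c \<le> N \<and> t \<le> T then cntf (Lc c) (\<lambda>r. tab r c) t else 0)"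

definition f2tab :: "nat \<Rightarrow> (nat \<Rightarrow> nat) \<Rightarrow> (nat \<Rightarrow> nat \<Rightarrow> nat) \<Rightarrow> nat \<Rightarrow> nat \<Rightarrow> nat" where
  "f2tab T lam f r c = (if (r, c) \<in> young_cells T lam then (LEAST t. r \<le> f c t) else 0)"

lemma cntf_cong: "(\<And>r. 1 \<le> r \<Longrightarrow> r \<le> L \<Longrightarrow> h r = h' r) \<Longrightarrow> cntf L h t = cntf L h' t"
  unfolding cntf_def by (rule arg_cong[where f = card]) auto

context
  fixes N T :: nat and Lc lam :: "nat \<Rightarrow> nat"
  assumes Ldec: "\<And>i. 1 \<le> i \<Longrightarrow> Suc i \<le> N \<Longrightarrow> Lc (Suc i) \<le> Lc i"
    and LT: "\<And>j. 1 \<le> j \<Longrightarrow> j \<le> N \<Longrightarrow> Lc j \<le> T"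
    and lamdef: "\<And>r. lam r = card {j \<in> {1..N}. r \<le> Lc j}"
begin

lemma Lc_mono: "1 \<le> j' \<Longrightarrow> j' \<le> j \<Longrightarrow> j \<le> N \<Longrightarrow> Lc j \<le> Lc j'"
proof -
  assume a: "1 \<le> j'" "j' \<le> j" "j \<le> N"
  obtain d where d: "j = j' + d" using a(2) le_Suc_ex by blast
  have "j' + d \<le> N \<Longrightarrow> Lc (j' + d) \<le> Lc j'"
  proof (induction d)
    case 0 then show ?case by simp
  next
    case (Suc d)
    have "Lc (Suc (j' + d)) \<le> Lc (j' + d)" using Ldec[of "j' + d"] Suc.prems a(1) by simp
    then show ?case using Suc by simp
  qed
  thus ?thesis using a d by simp
qed

lemma cells_char: "(r, c) \<in> young_cells T lam \<longleftrightarrow> (1 \<le> c \<and> c \<le> N \<and> 1 \<le> r \<and> r \<le> Lc c)"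
proof (cases "1 \<le> r")
  case False then show ?thesis unfolding young_cells_def by auto
next
  case True
  have P: "{j \<in> {1..N}. r \<le> Lc j} = {1..card {j \<in> {1..N}. r \<le> Lc j}}"
  proof (rule prefix_card[where L = N and Q = "\<lambda>j. r \<le> Lc j"])
    show "\<And>c. c \<in> {j \<in> {1..N}. r \<le> Lc j} \<longleftrightarrow> (1 \<le> c \<and> c \<le> N \<and> r \<le> Lc c)" by auto
  next
    fix c c' assume a: "1 \<le> c'" "c' \<le> c" "c \<le> N" "r \<le> Lc c"
    thus "r \<le> Lc c'" using Lc_mono[OF a(1-3)] by simp
  qed
  have "(r, c) \<in> young_cells T lam \<longleftrightarrow> r \<le> T \<and> 1 \<le> c \<and> c \<le> lam r" using True unfolding young_cells_def by auto
  also have "\<dots> \<longleftrightarrow> r \<le> T \<and> c \<in> {j \<in> {1..N}. r \<le> Lc j}" unfolding lamdef by (subst P, auto)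
  also have "\<dots> \<longleftrightarrow> (1 \<le> c \<and> c \<le> N \<and> r \<le> Lc c)" using LT[of c] by (auto intro: order_trans)
  finally show ?thesis using True by auto
qed

lemma col_adj: assumes tab: "tab \<in> ssyt T lam" and c: "1 \<le> c" "c \<le> N"
  shows "\<And>r. 1 \<le> r \<Longrightarrow> r < Lc c \<Longrightarrow> tab r c < tab (Suc r) c"
proof -
  fix r assume r: "1 \<le> r" "r < Lc c"
  have "(r, c) \<in> young_cells T lam" "(Suc r, c) \<in> young_cells T lam" using cells_char c r by auto
  thus "tab r c < tab (Suc r) c" by (rule tab_col[OF tab])
qed

lemma tab2f_FA: assumes tab: "tab \<in> ssyt T lam" shows "tab2f N T Lc tab \<in> FA N T Lc"
proof -
  have A: "\<forall>c t. \<not> (1 \<le> c \<and> c \<le> N \<and> t \<le> T) \<longrightarrow> tab2f N T Lc tab c t = 0" unfolding tab2f_def by auto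
  have B: "\<forall>c\<in>{1..N}. stepfun T (tab2f N T Lc tab c) \<and> tab2f N T Lc tab c T = Lc c"
  proof
    fix c assume c: "c \<in> {1..N}"
    note adj = col_adj[OF tab, of c]
    have cell: "\<And>r. 1 \<le> r \<Longrightarrow> r \<le> Lc c \<Longrightarrow> (r, c) \<in> young_cells T lam" using cells_char c by auto
    have z: "tab2f N T Lc tab c 0 = 0"
    proof -
      have "{r. 1 \<le> r \<and> r \<le> Lc c \<and> tab r c \<le> 0} = {}" using tab_range[OF tab cell] by fastforce
      thus ?thesis using c unfolding tab2f_def cntf_def by simp
    qed
    have s: "\<forall>t<T. tab2f N T Lc tab c (Suc t) = tab2f N T Lc tab c t \<or> tab2f N T Lc tab c (Suc t) = Suc (tab2f N T Lc tab c t)"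
      using cnt_step[of "Lc c" "\<lambda>r. tab r c"] adj c unfolding tab2f_def by auto
    have e: "tab2f N T Lc tab c T = Lc c"
    proof -
      have "{r. 1 \<le> r \<and> r \<le> Lc c \<and> tab r c \<le> T} = {1..Lc c}" using tab_range[OF tab cell] by fastforce
      thus ?thesis using c unfolding tab2f_def cntf_def by simp
    qed
    show "stepfun T (tab2f N T Lc tab c) \<and> tab2f N T Lc tab c T = Lc c" using z s e unfolding stepfun_def by simp
  qed
  have C: "\<forall>c\<in>{1..<N}. \<forall>t\<le>T. tab2f N T Lc tab (Suc c) t \<le> tab2f N T Lc tab c t"
  proof (intro ballI allI impI)
    fix c t assume c: "c \<in> {1..<N}" and t: "t \<le> T"
    have "cntf (Lc (Suc c)) (\<lambda>r. tab r (Suc c)) t \<le> cntf (Lc c) (\<lambda>r. tab r c) t"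
      unfolding cntf_def
    proof (rule card_mono)
      show "finite {r. 1 \<le> r \<and> r \<le> Lc c \<and> tab r c \<le> t}" by (rule finite_subset[of _ "{1..Lc c}"]) auto
      show "{r. 1 \<le> r \<and> r \<le> Lc (Suc c) \<and> tab r (Suc c) \<le> t} \<subseteq> {r. 1 \<le> r \<and> r \<le> Lc c \<and> tab r c \<le> t}"
      proof
        fix r assume r: "r \<in> {r. 1 \<le> r \<and> r \<le> Lc (Suc c) \<and> tab r (Suc c) \<le> t}"
        have lc: "Lc (Suc c) \<le> Lc c" using Ldec[of c] c by auto
        have c1: "(r, c) \<in> young_cells T lam" using cells_char c r lc by auto
        have c2: "(r, c + 1) \<in> young_cells T lam" using cells_char c r by auto
        have "tab r c \<le> tab r (Suc c)" using tab_row[OF tab c1] c2 by simp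
        thus "r \<in> {r. 1 \<le> r \<and> r \<le> Lc c \<and> tab r c \<le> t}" using r lc by auto
      qed
    qed
    thus "tab2f N T Lc tab (Suc c) t \<le> tab2f N T Lc tab c t" using c t unfolding tab2f_def by auto
  qed
  show ?thesis unfolding FA_def using A B C by blast
qed

lemma f2tab_tab2f: assumes tab: "tab \<in> ssyt T lam" shows "f2tab T lam (tab2f N T Lc tab) = tab"
proof (intro ext)
  fix r c
  show "f2tab T lam (tab2f N T Lc tab) r c = tab r c"
  proof (cases "(r, c) \<in> young_cells T lam")
    case False then show ?thesis using tab_out[OF tab False] unfolding f2tab_def by simp
  next
    case True
    have rc: "1 \<le> c" "c \<le> N" "1 \<le> r" "r \<le> Lc c" using True cells_char by auto
    note adj = col_adj[OF tab rc(1,2)]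
    have "(LEAST t. r \<le> tab2f N T Lc tab c t) = tab r c"
    proof (rule Least_equality)
      have "tab r c \<le> T" using tab_range[OF tab True] by simp
      thus "r \<le> tab2f N T Lc tab c (tab r c)" using cnt_prefix[where L="Lc c" and h="\<lambda>r. tab r c", OF adj rc(3,4), of "tab r c"] rc unfolding tab2f_def by simp
    next
      fix t assume "r \<le> tab2f N T Lc tab c t"
      hence "t \<le> T" "r \<le> cntf (Lc c) (\<lambda>r. tab r c) t" using rc unfolding tab2f_def by (auto split: if_splits)
      thus "tab r c \<le> t" using cnt_prefix[where L="Lc c" and h="\<lambda>r. tab r c", OF adj rc(3,4), of t] by simp
    qed
    then show ?thesis using True unfolding f2tab_def by simp
  qed
qed

lemma f2tab_ssyt: assumes f: "f \<in> FA N T Lc" shows "f2tab T lam f \<in> ssyt T lam"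
proof -
  have f0: "\<And>c t. \<not> (1 \<le> c \<and> c \<le> N \<and> t \<le> T) \<Longrightarrow> f c t = 0"
    and fs: "\<And>c. c \<in> {1..N} \<Longrightarrow> stepfun T (f c)" and fT: "\<And>c. c \<in> {1..N} \<Longrightarrow> f c T = Lc c"
    and fo: "\<And>c t. c \<in> {1..<N} \<Longrightarrow> t \<le> T \<Longrightarrow> f (Suc c) t \<le> f c t"
    using f unfolding FA_def by auto
  show ?thesis unfolding ssyt_def
  proof (intro CollectI conjI allI impI ballI)
    fix r c assume "(r, c) \<notin> young_cells T lam" thus "f2tab T lam f r c = 0" unfolding f2tab_def by simp
  next
    fix p assume p: "p \<in> young_cells T lam"
    obtain r c where rc: "p = (r, c)" by (cases p)
    have h: "1 \<le> c" "c \<le> N" "1 \<le> r" "r \<le> Lc c" using p rc cells_char by auto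
    have c: "c \<in> {1..N}" using h by simp
    show "case p of (r, c) \<Rightarrow> 1 \<le> f2tab T lam f r c \<and> f2tab T lam f r c \<le> T"
      using lst_pos[OF fs[OF c] fT[OF c] h(3,4)] lst_ex[OF fs[OF c] fT[OF c] h(4)] p rc unfolding f2tab_def by simp
  next
    fix p assume p: "p \<in> young_cells T lam"
    obtain r c where rc: "p = (r, c)" by (cases p)
    have h: "1 \<le> c" "c \<le> N" "1 \<le> r" "r \<le> Lc c" using p rc cells_char by auto
    show "case p of (r, c) \<Rightarrow> (r, c + 1) \<in> young_cells T lam \<longrightarrow> f2tab T lam f r c \<le> f2tab T lam f r (c + 1)"
    proof (simp only: rc prod.case, intro impI)
      assume c2: "(r, c + 1) \<in> young_cells T lam"
      have h2: "Suc c \<le> N" "r \<le> Lc (Suc c)" using c2 cells_char by auto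
      have c': "Suc c \<in> {1..N}" using h2 by simp
      define t0 where "t0 = (LEAST t. r \<le> f (Suc c) t)"
      have t0: "r \<le> f (Suc c) t0" "t0 \<le> T" using lst_ex[OF fs[OF c'] fT[OF c'] h2(2)] unfolding t0_def by auto
      have "f (Suc c) t0 \<le> f c t0" using fo[of c t0] h h2 t0 by simp
      hence "(LEAST t. r \<le> f c t) \<le> t0" using t0 by (intro Least_le) simp
      thus "f2tab T lam f r c \<le> f2tab T lam f r (c + 1)" using p rc c2 unfolding f2tab_def t0_def by simp
    qed
  next
    fix p assume p: "p \<in> young_cells T lam"
    obtain r c where rc: "p = (r, c)" by (cases p)
    have h: "1 \<le> c" "c \<le> N" "1 \<le> r" "r \<le> Lc c" using p rc cells_char by auto
    have c: "c \<in> {1..N}" using h by simp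
    show "case p of (r, c) \<Rightarrow> (r + 1, c) \<in> young_cells T lam \<longrightarrow> f2tab T lam f r c < f2tab T lam f (r + 1) c"
    proof (simp only: rc prod.case, intro impI)
      assume c2: "(r + 1, c) \<in> young_cells T lam"
      have h2: "Suc r \<le> Lc c" using c2 cells_char by auto
      show "f2tab T lam f r c < f2tab T lam f (r + 1) c"
        using lst_strict[OF fs[OF c] fT[OF c] h(3) h2] p rc c2 unfolding f2tab_def by simp
    qed
  qed
qed

lemma tab2f_f2tab: assumes f: "f \<in> FA N T Lc" shows "tab2f N T Lc (f2tab T lam f) = f"
proof (intro ext)
  have f0: "\<And>c t. \<not> (1 \<le> c \<and> c \<le> N \<and> t \<le> T) \<Longrightarrow> f c t = 0"
    and fs: "\<And>c. c \<in> {1..N} \<Longrightarrow> stepfun T (f c)" and fT: "\<And>c. c \<in> {1..N} \<Longrightarrow> f c T = Lc c"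
    using f unfolding FA_def by auto
  fix c t
  show "tab2f N T Lc (f2tab T lam f) c t = f c t"
  proof (cases "1 \<le> c \<and> c \<le> N \<and> t \<le> T")
    case False then show ?thesis using f0[OF False] False unfolding tab2f_def by auto
  next
    case True
    hence c: "c \<in> {1..N}" by simp
    have "cntf (Lc c) (\<lambda>r. f2tab T lam f r c) t = cntf (Lc c) (\<lambda>r. LEAST t. r \<le> f c t) t"
      by (rule cntf_cong, use True cells_char in \<open>simp add: f2tab_def\<close>)
    also have "\<dots> = f c t" using cnt_lst[OF fs[OF c] fT[OF c]] True by simp
    finally show ?thesis using True unfolding tab2f_def by simp
  qed
qed

lemma card_ssyt_FA: "card (ssyt T lam) = card (FA N T Lc)"
proof (rule bij_betw_same_card)
  show "bij_betw (tab2f N T Lc) (ssyt T lam) (FA N T Lc)"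
    by (rule bij_betw_byWitness[where f' = "f2tab T lam"], use f2tab_tab2f tab2f_f2tab tab2f_FA f2tab_ssyt in auto)
qed

end

lemma ssyt_P:
  "\<forall>lam. (\<forall>i. 1 \<le> i \<longrightarrow> Suc i \<le> T \<longrightarrow> lam (Suc i) \<le> lam i) \<longrightarrow> real (card (ssyt T lam)) = P T lam"
proof (induction T)
  case 0
  show ?case by (simp add: ssyt_0 P_def)
next
  case (Suc n)
  show ?case
  proof (intro allI impI)
    fix lam :: "nat \<Rightarrow> nat"
    assume dec: "\<forall>i. 1 \<le> i \<longrightarrow> Suc i \<le> Suc n \<longrightarrow> lam (Suc i) \<le> lam i"
    have dec': "\<And>i. 1 \<le> i \<Longrightarrow> i \<le> n \<Longrightarrow> lam (Suc i) \<le> lam i" using dec by auto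
    have "real (card (ssyt (Suc n) lam)) = (\<Sum>mu\<in>Box n lam. real (card (ssyt n mu)))"
      using card_ssyt_rec[where n=n and lam=lam, OF dec'] by simp
    also have "\<dots> = (\<Sum>mu\<in>Box n lam. P n mu)"
    proof (rule sum.cong[OF refl])
      fix mu assume mu: "mu \<in> Box n lam"
      have "\<forall>i. 1 \<le> i \<longrightarrow> Suc i \<le> n \<longrightarrow> mu (Suc i) \<le> mu i"
      proof (intro allI impI)
        fix i assume i: "1 \<le> i" "Suc i \<le> n"
        have "mu (Suc i) \<le> lam (Suc i)" using mu i unfolding Box_def by auto
        also have "lam (Suc i) \<le> mu i" using mu i unfolding Box_def by auto
        finally show "mu (Suc i) \<le> mu i" .
      qed
      thus "real (card (ssyt n mu)) = P n mu" using Suc.IH by blast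
    qed
    also have "\<dots> = P (Suc n) lam" using P_rec[of n lam] dec' by simp
    finally show "real (card (ssyt (Suc n) lam)) = P (Suc n) lam" .
  qed
qed

lemma ratio_lim:
  fixes a b :: nat
  assumes "0 < b"
  shows "((\<lambda>q::real. (q ^ a - 1) / (q ^ b - 1)) \<longlongrightarrow> real a / real b) (at 1)"
proof -
  have lim: "((\<lambda>q::real. (\<Sum>k<a. q ^ k) / (\<Sum>k<b. q ^ k)) \<longlongrightarrow> (\<Sum>k<a. 1 ^ k) / (\<Sum>k<b. (1::real) ^ k)) (at 1)"
    by (intro tendsto_intros) (use assms in auto)
  have ev: "eventually (\<lambda>q::real. (\<Sum>k<a. q ^ k) / (\<Sum>k<b. q ^ k) = (q ^ a - 1) / (q ^ b - 1)) (at 1)"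
  proof -
    have "\<And>q::real. q \<noteq> 1 \<Longrightarrow> (\<Sum>k<a. q ^ k) / (\<Sum>k<b. q ^ k) = (q ^ a - 1) / (q ^ b - 1)"
      unfolding power_diff_1_eq by simp
    thus ?thesis unfolding eventually_at_filter by (intro always_eventually) auto
  qed
  show ?thesis using tendsto_cong[OF ev] lim by simp
qed

lemma int_dec_chain:
  fixes L :: "nat \<Rightarrow> int"
  assumes adj: "\<And>i. 1 \<le> i \<Longrightarrow> i < N \<Longrightarrow> L (Suc i) \<le> L i"
    and a: "1 \<le> i" "i \<le> j" "j \<le> N"
  shows "L j \<le> L i"
proof -
  obtain d where d: "j = i + d" using a(2) le_Suc_ex by blast
  have "i + d \<le> N \<Longrightarrow> L (i + d) \<le> L i"
  proof (induction d)
    case 0 then show ?case by simp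
  next
    case (Suc d)
    have "L (Suc (i + d)) \<le> L (i + d)" using adj[of "i + d"] Suc.prems a(1) by simp
    then show ?case using Suc by simp
  qed
  thus ?thesis using a d by simp
qed

theorem proposition3:
  fixes N T :: nat and y :: "nat \<Rightarrow> int" and L :: "nat \<Rightarrow> int" and lam :: "nat \<Rightarrow> nat"
  assumes "N \<ge> 1" and "T \<ge> 1"
    and y_incr: "\<forall>i\<in>{1..<N}. y i < y (i + 1)"
    and y_par: "\<forall>i\<in>{1..N}. y i mod 2 = int T mod 2"
    and L_def: "\<forall>i. L i = (int T + 2 * (int i - 1) - y i) div 2"
    and "int T \<ge> L 1" and "L N \<ge> 0"
    and lam_def: "\<forall>k. lam k = card {j \<in> {1..N}. L j \<ge> int k}"
  shows "((\<lambda>q::real. schur T lam (\<lambda>k. q ^ (k - 1))) \<longlongrightarrow> real (M_count N T y)) (at 1)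
    \<and> ((\<lambda>q::real. q ^ (\<Sum>k=1..T. (k - 1) * lam k) *
          (\<Prod>i\<in>{1..T}. \<Prod>j\<in>{i<..T}.
             (q powi (int (lam i) - int (lam j) + int j - int i) - 1) / (q powi (int j - int i) - 1)))
        \<longlongrightarrow> real (M_count N T y)) (at 1)
    \<and> real (M_count N T y) =
        (\<Prod>i\<in>{1..T}. \<Prod>j\<in>{i<..T}.
           (real (lam i) - real (lam j) + real j - real i) / (real j - real i))"
proof -
  note LT1 = assms(6) and LN0 = assms(7)
  have twoL: "\<And>j. j \<in> {1..N} \<Longrightarrow> 2 * L j = int T + 2 * (int j - 1) - y j"
  proof -
    fix j assume j: "j \<in> {1..N}"
    have "(int T + 2 * (int j - 1) - y j) mod 2 = 0" using y_par j by (simp add: mod_diff_eq[symmetric] mod_add_eq[symmetric])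
    thus "2 * L j = int T + 2 * (int j - 1) - y j" using L_def by (metis dvd_mult_div_cancel mod_0_imp_dvd)
  qed
  have Ladj: "\<And>i. 1 \<le> i \<Longrightarrow> i < N \<Longrightarrow> L (Suc i) \<le> L i"
  proof -
    fix i assume i: "1 \<le> i" "i < N"
    have "y i < y (Suc i)" using y_incr i by auto
    moreover have "y i mod 2 = y (Suc i) mod 2" using y_par i by auto
    ultimately have "y i + 2 \<le> y (Suc i)" by presburger
    moreover have "2 * L i = int T + 2 * (int i - 1) - y i" using twoL i by auto
    moreover have "2 * L (Suc i) = int T + 2 * (int (Suc i) - 1) - y (Suc i)" using twoL i by auto
    ultimately show "L (Suc i) \<le> L i" by simp
  qed
  have Lrange: "\<And>j. j \<in> {1..N} \<Longrightarrow> 0 \<le> L j \<and> L j \<le> int T"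
  proof -
    fix j assume j: "j \<in> {1..N}"
    have "L N \<le> L j" using int_dec_chain[of N L j N] Ladj j by auto
    moreover have "L j \<le> L 1" using int_dec_chain[of N L 1 j] Ladj j by auto
    ultimately show "0 \<le> L j \<and> L j \<le> int T" using LT1 LN0 by auto
  qed
  define Lc where "Lc = (\<lambda>j. nat (L j))"
  have LcL: "\<And>j. j \<in> {1..N} \<Longrightarrow> int (Lc j) = L j" unfolding Lc_def using Lrange by auto
  have Ldec: "\<And>i. 1 \<le> i \<Longrightarrow> Suc i \<le> N \<Longrightarrow> Lc (Suc i) \<le> Lc i"
    using Ladj unfolding Lc_def by (simp add: nat_mono)
  have LT: "\<And>j. 1 \<le> j \<Longrightarrow> j \<le> N \<Longrightarrow> Lc j \<le> T"
    using Lrange unfolding Lc_def by (simp add: nat_le_iff)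
  have lamdef: "\<And>r. lam r = card {j \<in> {1..N}. r \<le> Lc j}"
  proof -
    fix r
    have "{j \<in> {1..N}. L j \<ge> int r} = {j \<in> {1..N}. r \<le> Lc j}" using LcL by force
    thus "lam r = card {j \<in> {1..N}. r \<le> Lc j}" using lam_def by simp
  qed
  have ydef: "\<And>j. 1 \<le> j \<Longrightarrow> j \<le> N \<Longrightarrow> y j = int T + 2 * (int j - 1) - 2 * int (Lc j)"
    using twoL LcL by force
  have M: "M_count N T y = card (ssyt T lam)"
    unfolding M_count_def
    using card_walks_FA[where N=N and T=T and Lc=Lc and y=y, OF ydef]
      card_ssyt_FA[where N=N and T=T and Lc=Lc and lam=lam, OF Ldec LT lamdef] by simp
  have lamdec: "\<And>i j. i \<le> j \<Longrightarrow> lam j \<le> lam i"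
  proof -
    fix i j :: nat assume ij: "i \<le> j"
    have "card {j' \<in> {1..N}. L j' \<ge> int j} \<le> card {j' \<in> {1..N}. L j' \<ge> int i}"
      by (rule card_mono) (use ij in auto)
    thus "lam j \<le> lam i" using lam_def by simp
  qed
  have MP: "real (M_count N T y) = P T lam"
    unfolding M using ssyt_P[of T] lamdec by auto
  have C3: "real (M_count N T y) =
        (\<Prod>i\<in>{1..T}. \<Prod>j\<in>{i<..T}. (real (lam i) - real (lam j) + real j - real i) / (real j - real i))"
    using MP unfolding P_def .
  have C1: "((\<lambda>q::real. schur T lam (\<lambda>k. q ^ (k - 1))) \<longlongrightarrow> real (M_count N T y)) (at 1)"
  proof -
    have "((\<lambda>q::real. schur T lam (\<lambda>k. q ^ (k - 1))) \<longlongrightarrow> schur T lam (\<lambda>k. 1 ^ (k - 1))) (at 1)"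
      unfolding schur_def by (intro tendsto_intros)
    moreover have "schur T lam (\<lambda>k. 1 ^ (k - 1)) = real (card (ssyt T lam))" unfolding schur_def by simp
    ultimately show ?thesis unfolding M by simp
  qed
  have C2: "((\<lambda>q::real. q ^ (\<Sum>k=1..T. (k - 1) * lam k) *
          (\<Prod>i\<in>{1..T}. \<Prod>j\<in>{i<..T}.
             (q powi (int (lam i) - int (lam j) + int j - int i) - 1) / (q powi (int j - int i) - 1)))
        \<longlongrightarrow> real (M_count N T y)) (at 1)"
  proof -
    have fac: "((\<lambda>q::real. (q powi (int (lam i) - int (lam j) + int j - int i) - 1) / (q powi (int j - int i) - 1))
       \<longlongrightarrow> (real (lam i) - real (lam j) + real j - real i) / (real j - real i)) (at 1)"
      if ij: "i \<in> {1..T}" "j \<in> {i<..T}" for i j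
    proof -
      have l: "lam j \<le> lam i" using lamdec ij by auto
      have e1: "int (lam i) - int (lam j) + int j - int i = int (lam i - lam j + j - i)" using l ij by auto
      have e2: "int j - int i = int (j - i)" using ij by auto
      have e3: "(real (lam i) - real (lam j) + real j - real i) / (real j - real i) = real (lam i - lam j + j - i) / real (j - i)"
        using l ij by (simp add: of_nat_diff)
      show ?thesis unfolding e1 e2 e3 power_int_of_nat by (rule ratio_lim) (use ij in auto)
    qed
    have "((\<lambda>q::real. q ^ (\<Sum>k=1..T. (k - 1) * lam k) *
          (\<Prod>i\<in>{1..T}. \<Prod>j\<in>{i<..T}.
             (q powi (int (lam i) - int (lam j) + int j - int i) - 1) / (q powi (int j - int i) - 1)))
        \<longlongrightarrow> 1 ^ (\<Sum>k=1..T. (k - 1) * lam k) * (\<Prod>i\<in>{1..T}. \<Prod>j\<in>{i<..T}.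
           (real (lam i) - real (lam j) + real j - real i) / (real j - real i))) (at 1)"
      by (intro tendsto_mult tendsto_power tendsto_ident_at tendsto_prod fac) auto
    thus ?thesis using C3 by simp
  qed
  show ?thesis using C1 C2 C3 by blast
qed

end
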